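(* Let $C_{\vec B}$ and $C_{\vec C}$ be Cantor sets with scale factors $M$ and $N$ respectively, and suppose $M$ and $N$ are multiplicatively independent. Then $\mu_{\vec B}(C_{\vec B}\cap C_{\vec C})=0$ and $\mu_{\vec C}(C_{\vec B}\cap C_{\vec C})=0$.
   Context: A Cantor set is specified by an integer scale factor $N\ge 3$ and a digit set $D\subset\{0,1,\dots,N-1\}$ with $2\le |D|\le N-1$; equivalently by its binary digit vector $\vec B=(b_0,\dots,b_{N-1})\in\{0,1\}^N$ with $b_i=1$ iff $i\in D$, and $\|\vec B\|:=\sum_i b_i$. With $\phi_d(x)=(x+d)/N$ for $d\in D$, the Cantor set $C_{\vec B}\subset[0,1]$ is the unique nonempty compact set with $C_{\vec B}=\bigcup_{d\in D}\phi_d(C_{\vec B})$, and $\mu_{\vec B}$ is the unique Borel probability measure with $\mu_{\vec B}=\frac{1}{\|\vec B\|}\sum_{d\in D}\mu_{\vec B}\circ\phi_d^{-1}$ (supported on $C_{\vec B}$). Two integers $r,s$ are multiplicatively dependent if there exist integers $m,n$, not both zero, with $r^m=s^n$; otherwise they are multiplicatively independent. *)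

theory Defs
  imports "HOL-Probability.Probability"
begin

text \<open>Admissible Cantor data: scale factor N \<ge> 3 and digit set D \<subseteq> {0,...,N-1}
  with 2 \<le> |D| \<le> N-1.  (D is the set of indices i with b_i = 1 in the digit vector.)\<close>
definition cantor_data :: "nat \<Rightarrow> nat set \<Rightarrow> bool" where
  "cantor_data N D \<longleftrightarrow> N \<ge> 3 \<and> D \<subseteq> {0..<N} \<and> 2 \<le> card D \<and> card D \<le> N - 1"

definition cmap :: "nat \<Rightarrow> nat \<Rightarrow> real \<Rightarrow> real" where
  "cmap N d x = (x + real d) / real N"

definition cantor_set :: "nat \<Rightarrow> nat set \<Rightarrow> real set" where
  "cantor_set N D = (THE K. K \<noteq> {} \<and> compact K \<and> K = (\<Union>d\<in>D. cmap N d ` K))"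

definition cantor_measure :: "nat \<Rightarrow> nat set \<Rightarrow> real measure" where
  "cantor_measure N D = (THE \<mu>. sets \<mu> = sets borel \<and> prob_space \<mu> \<and>
     (\<forall>A\<in>sets borel. measure \<mu> A =
        (\<Sum>d\<in>D. measure \<mu> (cmap N d -` A \<inter> space \<mu>)) / real (card D)))"

definition mult_dependent :: "int \<Rightarrow> int \<Rightarrow> bool" where
  "mult_dependent r s \<longleftrightarrow>
     (\<exists>m n :: int. (m \<noteq> 0 \<or> n \<noteq> 0) \<and> (of_int r :: real) powi m = (of_int s :: real) powi n)"

definition mult_independent :: "int \<Rightarrow> int \<Rightarrow> bool" where
  "mult_independent r s \<longleftrightarrow> \<not> mult_dependent r s"

end

theory Submission
  imports Defs
begin

definition hF :: "nat \<Rightarrow> nat set \<Rightarrow> real set \<Rightarrow> real set" where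
  "hF N D S = (\<Union>d\<in>D. cmap N d ` S)"

lemma hF_mono: "S \<subseteq> T \<Longrightarrow> hF N D S \<subseteq> hF N D T"
  unfolding hF_def by blast

lemma hF_unit:
  assumes "D \<subseteq> {0..<N}" shows "hF N D {0..1} \<subseteq> {0..1}"
proof
  fix x assume "x \<in> hF N D {0..1}"
  then obtain d y where d: "d \<in> D" and y: "0 \<le> y" "y \<le> 1" and x: "x = (y + real d) / real N"
    unfolding hF_def cmap_def by auto
  have "d < N" using d assms by auto
  hence "real d + 1 \<le> real N" by linarith
  moreover have "real N > 0" using \<open>d < N\<close> by simp
  ultimately have "y + real d \<le> real N" using y by linarith
  then show "x \<in> {0..1}" using x y \<open>real N > 0\<close> by (auto simp: divide_le_eq_1)
qed

lemma cmap_cont: "continuous_on S (cmap N d)"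
  unfolding cmap_def divide_inverse by (intro continuous_intros)

lemma hF_compact: "finite D \<Longrightarrow> compact S \<Longrightarrow> compact (hF N D S)"
  unfolding hF_def by (intro compact_UN compact_continuous_image cmap_cont) auto

lemma hF_nonempty: "D \<noteq> {} \<Longrightarrow> S \<noteq> {} \<Longrightarrow> hF N D S \<noteq> {}"
  unfolding hF_def by auto

lemma hF_iter_unit: "D \<subseteq> {0..<N} \<Longrightarrow> (hF N D ^^ n) {0..1} \<subseteq> {0..1}"
proof (induction n)
  case (Suc n)
  then show ?case using hF_mono[OF Suc.IH[OF Suc.prems], of N D] hF_unit[OF Suc.prems] by auto
qed simp

lemma hF_iter_decr: assumes "D \<subseteq> {0..<N}" shows "m \<le> n \<Longrightarrow> (hF N D ^^ n) {0..1} \<subseteq> (hF N D ^^ m) {0..1}"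
proof (induction n arbitrary: m)
  case 0 then show ?case by simp
next
  case (Suc n)
  show ?case
  proof (cases m)
    case 0 then show ?thesis using hF_iter_unit[OF assms, of "Suc n"] by simp
  next
    case (Suc m')
    then have "(hF N D ^^ n) {0..1} \<subseteq> (hF N D ^^ m') {0..1}" using Suc.IH Suc.prems by simp
    then show ?thesis using Suc hF_mono by simp
  qed
qed

lemma hF_iter_compact: "finite D \<Longrightarrow> compact ((hF N D ^^ n) {0..1})"
  by (induction n) (auto intro: hF_compact)

lemma hF_iter_nonempty: "D \<noteq> {} \<Longrightarrow> (hF N D ^^ n) {0..1} \<noteq> {}"
  by (induction n) (auto simp: hF_def)

definition Kst :: "nat \<Rightarrow> nat set \<Rightarrow> real set" where
  "Kst N D = (\<Inter>n. (hF N D ^^ n) {0..1})"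

lemma cmap_inj: "N > 0 \<Longrightarrow> cmap N d x = cmap N d y \<Longrightarrow> x = y"
  unfolding cmap_def by (auto simp: field_simps)

lemma Kst_fix:
  assumes D: "D \<subseteq> {0..<N}" "finite D" and N: "N > 0"
  shows "hF N D (Kst N D) = Kst N D"
proof
  show "hF N D (Kst N D) \<subseteq> Kst N D"
  proof
    fix x assume "x \<in> hF N D (Kst N D)"
    then obtain d y where d: "d \<in> D" and y: "y \<in> Kst N D" and x: "x = cmap N d y"
      unfolding hF_def by auto
    show "x \<in> Kst N D" unfolding Kst_def
    proof
      fix n :: nat
      have "y \<in> (hF N D ^^ n) {0..1}" using y unfolding Kst_def by auto
      hence "x \<in> (hF N D ^^ Suc n) {0..1}" using d x by (auto simp: hF_def)
      thus "x \<in> (hF N D ^^ n) {0..1}" using hF_iter_decr[OF D(1), of n "Suc n"] by auto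
    qed
  qed
next
  show "Kst N D \<subseteq> hF N D (Kst N D)"
  proof
    fix x assume x: "x \<in> Kst N D"
    have "\<forall>n. \<exists>d\<in>D. \<exists>y. y \<in> (hF N D ^^ n) {0..1} \<and> x = cmap N d y"
    proof
      fix n
      have "x \<in> (hF N D ^^ Suc n) {0..1}" using x unfolding Kst_def by blast
      thus "\<exists>d\<in>D. \<exists>y. y \<in> (hF N D ^^ n) {0..1} \<and> x = cmap N d y" by (auto simp: hF_def)
    qed
    then obtain dd yy where dd: "\<And>n. dd n \<in> D" and yy: "\<And>n. yy n \<in> (hF N D ^^ n) {0..1}"
      and xe: "\<And>n. x = cmap N (dd n) (yy n)" by metis
    have "\<exists>d\<in>D. infinite {n. dd n = d}"
    proof (rule ccontr)
      assume "\<not> ?thesis"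
      hence "finite (\<Union>d\<in>D. {n. dd n = d})" using D by auto
      moreover have "(\<Union>d\<in>D. {n. dd n = d}) = UNIV" using dd by auto
      ultimately show False by simp
    qed
    then obtain d where d: "d \<in> D" and inf: "infinite {n. dd n = d}" by blast
    define y where "y = real N * x - real d"
    have yx: "x = cmap N d y" using N unfolding y_def cmap_def by (auto simp: field_simps)
    have "y \<in> Kst N D" unfolding Kst_def
    proof
      fix n :: nat
      obtain m where m: "m \<ge> n" "dd m = d" using inf
        by (metis (mono_tags, lifting) infinite_nat_iff_unbounded_le mem_Collect_eq)
      have "yy m = y" using cmap_inj[OF N, of d "yy m" y] xe[of m] yx m by simp
      thus "y \<in> (hF N D ^^ n) {0..1}" using yy[of m] hF_iter_decr[OF D(1) m(1)] by auto
    qed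
    thus "x \<in> hF N D (Kst N D)" using d yx unfolding hF_def by auto
  qed
qed

lemma Kst_compact: "finite D \<Longrightarrow> compact (Kst N D)"
  unfolding Kst_def
  by (intro compact_Inter) (auto intro: hF_iter_compact)

lemma Kst_nonempty: assumes "D \<subseteq> {0..<N}" "D \<noteq> {}" shows "Kst N D \<noteq> {}"
  unfolding Kst_def
proof (rule compact_nest)
  have "finite D" using assms(1) finite_subset by blast
  then show "\<And>n. compact ((hF N D ^^ n) {0..1})" by (rule hF_iter_compact)
  show "\<And>n. (hF N D ^^ n) {0..1} \<noteq> {}" using assms(2) by (rule hF_iter_nonempty)
  show "\<And>m n. m \<le> n \<Longrightarrow> (hF N D ^^ n) {0..1} \<subseteq> (hF N D ^^ m) {0..1}"
    using hF_iter_decr[OF assms(1)] by blast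
qed

lemma attractor_unit:
  assumes D: "D \<subseteq> {0..<N}" and N: "N \<ge> 2" and K: "compact K" "K \<noteq> {}" "K = hF N D K"
  shows "K \<subseteq> {0..1}"
proof -
  obtain m where m: "m \<in> K" "\<And>y. y \<in> K \<Longrightarrow> m \<le> y" using compact_attains_inf[OF K(1,2)] by blast
  obtain u where u: "u \<in> K" "\<And>y. y \<in> K \<Longrightarrow> y \<le> u" using compact_attains_sup[OF K(1,2)] by blast
  have NN: "real N \<ge> 2" using N by simp
  have "m \<in> hF N D K" using K(3) m(1) by simp
  then obtain d y where dy: "d \<in> D" "y \<in> K" "m = (y + real d) / real N" unfolding hF_def cmap_def by auto
  have "m * real N = y + real d" using dy(3) NN by simp
  moreover have "y \<ge> m" using m(2) dy(2) by simp
  ultimately have "m * (real N - 1) \<ge> 0" by (simp add: algebra_simps)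
  hence m0: "m \<ge> 0" using NN by (simp add: zero_le_mult_iff)
  have "u \<in> hF N D K" using K(3) u(1) by simp
  then obtain d' y' where dy': "d' \<in> D" "y' \<in> K" "u = (y' + real d') / real N" unfolding hF_def cmap_def by auto
  have "u * real N = y' + real d'" using dy'(3) NN by simp
  moreover have "y' \<le> u" using u(2) dy'(2) by simp
  moreover have "real d' \<le> real N - 1" using dy'(1) D by force
  ultimately have "u * (real N - 1) \<le> 1 * (real N - 1)" by (simp add: algebra_simps)
  hence u1: "u \<le> 1" using NN by (simp add: mult_le_cancel_right)
  show ?thesis using m0 u1 m(2) u(2) by force
qed

lemma attractor_eq_Kst:
  assumes D: "D \<subseteq> {0..<N}" and N: "N \<ge> 2" and K: "compact K" "K \<noteq> {}" "K = hF N D K"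
  shows "K = Kst N D"
proof
  have K01: "K \<subseteq> {0..1}" by (rule attractor_unit[OF assms])
  have "K \<subseteq> (hF N D ^^ n) {0..1}" for n
  proof (induction n)
    case 0 then show ?case using K01 by simp
  next
    case (Suc n)
    have "K = hF N D K" by (rule K(3))
    also have "\<dots> \<subseteq> hF N D ((hF N D ^^ n) {0..1})" by (rule hF_mono[OF Suc.IH])
    finally show ?case by simp
  qed
  then show "K \<subseteq> Kst N D" unfolding Kst_def by blast
next
  have K01: "K \<subseteq> {0..1}" by (rule attractor_unit[OF assms])
  have NN: "real N \<ge> 2" using N by simp
  have approx: "\<forall>x \<in> (hF N D ^^ n) {0..1}. \<exists>y\<in>K. \<bar>x - y\<bar> \<le> 1 / real N ^ n" for n
  proof (induction n)
    case 0
    obtain y where "y \<in> K" using K(2) by blast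
    then show ?case using K01 by force
  next
    case (Suc n)
    show ?case
    proof
      fix x assume "x \<in> (hF N D ^^ Suc n) {0..1}"
      then obtain d x' where d: "d \<in> D" and x': "x' \<in> (hF N D ^^ n) {0..1}" and x: "x = cmap N d x'"
        by (auto simp: hF_def)
      obtain y' where y': "y' \<in> K" "\<bar>x' - y'\<bar> \<le> 1 / real N ^ n" using Suc.IH x' by blast
      have "cmap N d y' \<in> hF N D K" using d y' by (auto simp: hF_def)
      hence yK: "cmap N d y' \<in> K" using K(3) by simp
      have "\<bar>x - cmap N d y'\<bar> = \<bar>x' - y'\<bar> / real N"
        using NN by (simp add: x cmap_def diff_divide_distrib[symmetric])
      also have "\<dots> \<le> (1 / real N ^ n) / real N" using y'(2) NN by (intro divide_right_mono) auto
      also have "\<dots> = 1 / real N ^ Suc n" by simp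
      finally show "\<exists>y\<in>K. \<bar>x - y\<bar> \<le> 1 / real N ^ Suc n" using yK by blast
    qed
  qed
  show "Kst N D \<subseteq> K"
  proof
    fix x assume x: "x \<in> Kst N D"
    have "x \<in> closure K"
      unfolding closure_approachable
    proof (intro allI impI)
      fix e :: real assume e: "e > 0"
      obtain n where n: "inverse (real N ^ n) < e"
      proof -
        have "inverse (real N) < 1" using NN by (simp add: inverse_less_1_iff)
        then show ?thesis using real_arch_pow_inv[OF e, of "inverse (real N)"] that by (auto simp: power_inverse)
      qed
      have "x \<in> (hF N D ^^ n) {0..1}" using x unfolding Kst_def by blast
      then obtain y where "y \<in> K" "\<bar>x - y\<bar> \<le> 1 / real N ^ n" using approx by blast
      then show "\<exists>y\<in>K. dist y x < e" using n unfolding dist_real_def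
        by (metis abs_minus_commute divide_inverse mult_1 order_le_less_trans)
    qed
    then show "x \<in> K" using compact_imp_closed[OF K(1)] closure_closed by auto
  qed
qed

lemma cantor_set_eq:
  assumes "cantor_data N D"
  shows "cantor_set N D = Kst N D"
proof -
  have D: "D \<subseteq> {0..<N}" and N: "N \<ge> 2" and Dne: "D \<noteq> {}" and fin: "finite D"
    using assms unfolding cantor_data_def by (auto intro: finite_subset)
  have P: "Kst N D \<noteq> {} \<and> compact (Kst N D) \<and> Kst N D = (\<Union>d\<in>D. cmap N d ` Kst N D)"
    using Kst_nonempty[OF D Dne] Kst_compact[OF fin] Kst_fix[OF D fin] N unfolding hF_def by auto
  show ?thesis unfolding cantor_set_def
  proof (rule the_equality)
    show "Kst N D \<noteq> {} \<and> compact (Kst N D) \<and> Kst N D = (\<Union>d\<in>D. cmap N d ` Kst N D)" by (rule P)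
    fix K assume "K \<noteq> {} \<and> compact K \<and> K = (\<Union>d\<in>D. cmap N d ` K)"
    then show "K = Kst N D" using attractor_eq_Kst[OF D N] unfolding hF_def by blast
  qed
qed

lemma cantor_set_props:
  assumes "cantor_data N D"
  shows "compact (cantor_set N D)" "cantor_set N D \<subseteq> {0..1}"
    "\<And>x. x \<in> cantor_set N D \<Longrightarrow> \<exists>d\<in>D. \<exists>y\<in>cantor_set N D. x = (y + real d) / real N"
proof -
  have D: "D \<subseteq> {0..<N}" and N: "N \<ge> 2" and Dne: "D \<noteq> {}" and fin: "finite D"
    using assms unfolding cantor_data_def by (auto intro: finite_subset)
  have eq: "cantor_set N D = Kst N D" by (rule cantor_set_eq[OF assms])
  show "compact (cantor_set N D)" using eq Kst_compact[OF fin] by simp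
  show "cantor_set N D \<subseteq> {0..1}" using eq unfolding Kst_def by (metis INT_lower UNIV_I funpow_0)
  fix x assume "x \<in> cantor_set N D"
  hence "x \<in> hF N D (Kst N D)" using eq Kst_fix[OF D fin] N by simp
  then show "\<exists>d\<in>D. \<exists>y\<in>cantor_set N D. x = (y + real d) / real N"
    using eq unfolding hF_def cmap_def by auto
qed

definition cm_prop :: "nat \<Rightarrow> nat set \<Rightarrow> real measure \<Rightarrow> bool" where
  "cm_prop N D \<mu> \<longleftrightarrow> sets \<mu> = sets borel \<and> prob_space \<mu> \<and>
     (\<forall>A\<in>sets borel. measure \<mu> A =
        (\<Sum>d\<in>D. measure \<mu> (cmap N d -` A \<inter> space \<mu>)) / real (card D))"

lemma cmap_meas[measurable]: "cmap N d \<in> borel_measurable borel"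
  unfolding cmap_def by measurable

lemma cm_prop_distr:
  assumes P: "cm_prop N D \<nu>" and D: "finite D" "D \<noteq> {}"
  shows "\<nu> = distr (measure_pmf (pmf_of_set D) \<Otimes>\<^sub>M \<nu>) borel (\<lambda>z. cmap N (fst z) (snd z))"
proof -
  have sets: "sets \<nu> = sets borel" and ps: "prob_space \<nu>" using P unfolding cm_prop_def by auto
  interpret prob_space \<nu> by (rule ps)
  have sp: "space \<nu> = UNIV" using sets_eq_imp_space_eq[OF sets] by simp
  define p where "p = pmf_of_set D"
  have g: "(\<lambda>z. cmap N (fst z) (snd z)) \<in> borel_measurable (measure_pmf p \<Otimes>\<^sub>M \<nu>)"
  proof -
    have s: "snd \<in> borel_measurable (measure_pmf p \<Otimes>\<^sub>M \<nu>)"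
      using measurable_snd[of "measure_pmf p" \<nu>] unfolding measurable_cong_sets[OF refl sets] .
    have f0: "(\<lambda>d::nat. real d) \<in> borel_measurable (measure_pmf p)" by simp
    have f: "(\<lambda>z. real (fst z)) \<in> borel_measurable (measure_pmf p \<Otimes>\<^sub>M \<nu>)"
      by (rule measurable_compose[OF measurable_fst f0])
    show ?thesis unfolding cmap_def using s f by measurable
  qed
  show ?thesis
  proof (rule measure_eqI)
    show "sets \<nu> = sets (distr (measure_pmf (pmf_of_set D) \<Otimes>\<^sub>M \<nu>) borel (\<lambda>z. cmap N (fst z) (snd z)))"
      using sets by simp
    fix A assume A: "A \<in> sets \<nu>"
    hence Ab: "A \<in> sets borel" using sets by simp
    have "emeasure (distr (measure_pmf p \<Otimes>\<^sub>M \<nu>) borel (\<lambda>z. cmap N (fst z) (snd z))) A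
        = emeasure (measure_pmf p \<Otimes>\<^sub>M \<nu>) ((\<lambda>z. cmap N (fst z) (snd z)) -` A \<inter> space (measure_pmf p \<Otimes>\<^sub>M \<nu>))"
      by (rule emeasure_distr[OF g Ab])
    also have "\<dots> = (\<integral>\<^sup>+d. emeasure \<nu> (Pair d -` ((\<lambda>z. cmap N (fst z) (snd z)) -` A \<inter> space (measure_pmf p \<Otimes>\<^sub>M \<nu>))) \<partial>measure_pmf p)"
      by (rule emeasure_pair_measure_alt) (use g Ab in measurable)
    also have "\<dots> = (\<integral>\<^sup>+d. emeasure \<nu> (cmap N d -` A) \<partial>measure_pmf p)"
      by (intro nn_integral_cong arg_cong[where f="emeasure \<nu>"]) (auto simp: space_pair_measure sp)
    also have "\<dots> = (\<Sum>d\<in>D. emeasure \<nu> (cmap N d -` A) * ennreal (1 / real (card D)))"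
      using D by (subst nn_integral_measure_pmf_finite) (auto simp: p_def)
    also have "\<dots> = (\<Sum>d\<in>D. ennreal (measure \<nu> (cmap N d -` A) / real (card D)))"
      by (intro sum.cong refl) (simp add: emeasure_eq_measure ennreal_mult'[symmetric] divide_inverse)
    also have "\<dots> = ennreal (\<Sum>d\<in>D. measure \<nu> (cmap N d -` A) / real (card D))"
      by (rule sum_ennreal) simp
    also have "(\<Sum>d\<in>D. measure \<nu> (cmap N d -` A) / real (card D)) = measure \<nu> A"
      using P Ab unfolding cm_prop_def by (simp add: sp sum_divide_distrib)
    finally show "emeasure \<nu> A = emeasure (distr (measure_pmf (pmf_of_set D) \<Otimes>\<^sub>M \<nu>) borel (\<lambda>z. cmap N (fst z) (snd z))) A"
      by (simp add: emeasure_eq_measure p_def)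
  qed
qed

lemma cm_prop_char:
  assumes P: "cm_prop N D \<nu>" and D: "finite D" "D \<noteq> {}" and N: "N > 0"
  shows "char \<nu> t = (\<Sum>d\<in>D. iexp (t * real d / real N)) / real (card D) * char \<nu> (t / real N)"
proof -
  have sets: "sets \<nu> = sets borel" and ps: "prob_space \<nu>" using P unfolding cm_prop_def by auto
  interpret prob_space \<nu> by (rule ps)
  define p where "p = pmf_of_set D"
  interpret pair_sigma_finite "measure_pmf p" \<nu> ..
  interpret pp: prob_space "measure_pmf p \<Otimes>\<^sub>M \<nu>" by (intro prob_space_pair) unfold_locales
  have s: "snd \<in> borel_measurable (measure_pmf p \<Otimes>\<^sub>M \<nu>)"
    using measurable_snd[of "measure_pmf p" \<nu>] unfolding measurable_cong_sets[OF refl sets] .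
  have f0: "(\<lambda>d::nat. real d) \<in> borel_measurable (measure_pmf p)" by simp
  have f: "(\<lambda>z. real (fst z)) \<in> borel_measurable (measure_pmf p \<Otimes>\<^sub>M \<nu>)"
    by (rule measurable_compose[OF measurable_fst f0])
  have g: "(\<lambda>z. cmap N (fst z) (snd z)) \<in> borel_measurable (measure_pmf p \<Otimes>\<^sub>M \<nu>)"
    unfolding cmap_def using s f by measurable
  have e_meas: "(\<lambda>x. iexp (t * x)) \<in> borel_measurable borel" by measurable
  have "char \<nu> t = (CLINT x|distr (measure_pmf p \<Otimes>\<^sub>M \<nu>) borel (\<lambda>z. cmap N (fst z) (snd z)). iexp (t * x))"
    unfolding char_def p_def using cm_prop_distr[OF P D] by simp
  also have "\<dots> = (CLINT z|measure_pmf p \<Otimes>\<^sub>M \<nu>. iexp (t * cmap N (fst z) (snd z)))"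
    by (rule integral_distr[OF g]) measurable
  also have "\<dots> = (CLINT d|measure_pmf p. CLINT x|\<nu>. iexp (t * cmap N d x))"
  proof -
    have int: "integrable (measure_pmf p \<Otimes>\<^sub>M \<nu>) (\<lambda>z. iexp (t * cmap N (fst z) (snd z)))"
      by (rule pp.integrable_const_bound[where B=1]) (use g in auto)
    show ?thesis using integral_fst'[OF int] by simp
  qed
  also have "\<dots> = (CLINT d|measure_pmf p. iexp (t * real d / real N) * char \<nu> (t / real N))"
  proof (rule Bochner_Integration.integral_cong[OF refl])
    fix d assume "d \<in> space (measure_pmf p)"
    have "(CLINT x|\<nu>. iexp (t * cmap N d x)) = (CLINT x|\<nu>. iexp (t * real d / real N) * iexp (t / real N * x))"
      by (rule Bochner_Integration.integral_cong[OF refl]) (simp add: cmap_def field_simps add_divide_distrib flip: exp_add)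
    also have "\<dots> = iexp (t * real d / real N) * char \<nu> (t / real N)"
      unfolding char_def by simp
    finally show "(CLINT x|\<nu>. iexp (t * cmap N d x)) = iexp (t * real d / real N) * char \<nu> (t / real N)" .
  qed
  also have "\<dots> = (\<Sum>d\<in>D. pmf p d *\<^sub>R (iexp (t * real d / real N) * char \<nu> (t / real N)))"
    by (rule integral_measure_pmf[OF D(1)]) (use D in \<open>auto simp: p_def\<close>)
  also have "\<dots> = (\<Sum>d\<in>D. iexp (t * real d / real N)) / real (card D) * char \<nu> (t / real N)"
    using D by (simp add: p_def scaleR_conv_of_real sum_distrib_right sum_divide_distrib)
  finally show ?thesis .
qed

lemma cm_prop_real_distribution: "cm_prop N D \<nu> \<Longrightarrow> real_distribution \<nu>"
  unfolding cm_prop_def real_distribution_def real_distribution_axioms_def by auto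

lemma mfactor_le1:
  assumes "finite D" "D \<noteq> {}"
  shows "cmod ((\<Sum>d\<in>D. iexp (f d)) / real (card D)) \<le> 1"
proof -
  have "cmod (\<Sum>d\<in>D. iexp (f d)) \<le> (\<Sum>d\<in>D. cmod (iexp (f d)))" by (rule norm_sum)
  also have "\<dots> = real (card D)" by simp
  moreover have "card D > 0" using assms by (simp add: card_gt_0_iff)
  ultimately show ?thesis using assms by (simp add: norm_divide divide_le_eq_1)
qed

lemma cm_prop_unique:
  assumes P1: "cm_prop N D \<nu>1" and P2: "cm_prop N D \<nu>2" and D: "finite D" "D \<noteq> {}" and N: "N \<ge> 2"
  shows "\<nu>1 = \<nu>2"
proof (rule Levy_uniqueness)
  show r1: "real_distribution \<nu>1" and r2: "real_distribution \<nu>2" using P1 P2 by (auto intro: cm_prop_real_distribution)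
  have N0: "N > 0" using N by simp
  define df where "df t = char \<nu>1 t - char \<nu>2 t" for t
  have step: "cmod (df t) \<le> cmod (df (t / real N))" for t
  proof -
    have "df t = (\<Sum>d\<in>D. iexp (t * real d / real N)) / real (card D) * df (t / real N)"
      unfolding df_def using cm_prop_char[OF P1 D N0, of t] cm_prop_char[OF P2 D N0, of t]
      by (simp add: right_diff_distrib)
    hence "cmod (df t) = cmod ((\<Sum>d\<in>D. iexp (t * real d / real N)) / real (card D)) * cmod (df (t / real N))"
      by (metis norm_mult)
    also have "\<dots> \<le> 1 * cmod (df (t / real N))"
      by (intro mult_right_mono mfactor_le1[OF D]) simp
    finally show ?thesis by simp
  qed
  have iter: "cmod (df t) \<le> cmod (df (t / real N ^ n))" for n t
  proof (induction n)
    case (Suc n)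
    also have "cmod (df (t / real N ^ n)) \<le> cmod (df (t / real N ^ n / real N))" by (rule step)
    finally show ?case by (simp add: field_simps)
  qed simp
  show "char \<nu>1 = char \<nu>2"
  proof
    fix t
    have lim0: "(\<lambda>n. t / real N ^ n) \<longlonglongrightarrow> 0" by (rule LIMSEQ_divide_realpow_zero) (use N in simp)
    have c1: "isCont (char \<nu>1) 0" using r1 by (rule real_distribution.isCont_char)
    have c2: "isCont (char \<nu>2) 0" using r2 by (rule real_distribution.isCont_char)
    have "(\<lambda>n. df (t / real N ^ n)) \<longlonglongrightarrow> df 0"
      unfolding df_def by (intro tendsto_diff isCont_tendsto_compose[OF c1 lim0] isCont_tendsto_compose[OF c2 lim0])
    moreover have "df 0 = 0" unfolding df_def using real_distribution.char_zero[OF r1] real_distribution.char_zero[OF r2] by simp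
    ultimately have "(\<lambda>n. cmod (df (t / real N ^ n))) \<longlonglongrightarrow> 0" using tendsto_norm by fastforce
    hence "cmod (df t) \<le> 0" by (rule LIMSEQ_le_const) (use iter in auto)
    thus "char \<nu>1 t = char \<nu>2 t" unfolding df_def by simp
  qed
qed

definition sterm :: "nat \<Rightarrow> nat stream \<Rightarrow> nat \<Rightarrow> real" where
  "sterm N \<omega> i = real (min (\<omega> !! i) N) / real N ^ Suc i"

definition sval :: "nat \<Rightarrow> nat stream \<Rightarrow> real" where
  "sval N \<omega> = (\<Sum>i. sterm N \<omega> i)"

lemma sterm_summable:
  assumes N: "N \<ge> 2" shows "summable (sterm N \<omega>)"
proof (rule summable_comparison_test)
  show "summable (\<lambda>i. (1 / real N) ^ i)" using N by (intro summable_geometric) simp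
  show "\<exists>n0. \<forall>n\<ge>n0. norm (sterm N \<omega> n) \<le> (1 / real N) ^ n"
  proof (intro exI allI impI)
    fix n :: nat
    have "real (min (\<omega> !! n) N) \<le> real N" by simp
    hence "real (min (\<omega> !! n) N) / real N ^ Suc n \<le> real N / real N ^ Suc n"
      using N by (intro divide_right_mono) auto
    also have "\<dots> = (1 / real N) ^ n" using N by (simp add: power_divide)
    finally show "norm (sterm N \<omega> n) \<le> (1 / real N) ^ n" by (simp add: sterm_def)
  qed
qed

lemma sval_Cons:
  assumes N: "N \<ge> 2" and x: "x < N" shows "sval N (x ## \<omega>) = cmap N x (sval N \<omega>)"
proof -
  have "sval N (x ## \<omega>) = sterm N (x ## \<omega>) 0 + (\<Sum>i. sterm N (x ## \<omega>) (Suc i))"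
    unfolding sval_def using suminf_split_head[OF sterm_summable[OF N, of "x ## \<omega>"]] by simp
  also have "(\<lambda>i. sterm N (x ## \<omega>) (Suc i)) = (\<lambda>i. sterm N \<omega> i / real N)"
    by (auto simp: sterm_def)
  also have "(\<Sum>i. sterm N \<omega> i / real N) = sval N \<omega> / real N"
    unfolding sval_def by (rule suminf_divide[OF sterm_summable[OF N]])
  finally show ?thesis using x by (simp add: sterm_def cmap_def add_divide_distrib)
qed

lemma sval_meas:
  assumes N: "N \<ge> 2"
  shows "sval N \<in> borel_measurable (stream_space (measure_pmf p))"
proof (rule borel_measurable_LIMSEQ_real)
  fix \<omega>
  show "(\<lambda>n. \<Sum>i<n. sterm N \<omega> i) \<longlonglongrightarrow> sval N \<omega>"
    unfolding sval_def by (rule summable_LIMSEQ[OF sterm_summable[OF N]])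
next
  fix n
  have "(\<lambda>\<omega>. sterm N \<omega> i) \<in> borel_measurable (stream_space (measure_pmf p))" for i
  proof -
    have f0: "(\<lambda>d::nat. real (min d N) / real N ^ Suc i) \<in> borel_measurable (measure_pmf p)" by simp
    show ?thesis unfolding sterm_def by (rule measurable_compose[OF measurable_snth f0])
  qed
  then show "(\<lambda>\<omega>. \<Sum>i<n. sterm N \<omega> i) \<in> borel_measurable (stream_space (measure_pmf p))"
    by (intro borel_measurable_sum) auto
qed

lemma cm_prop_exists:
  assumes D: "finite D" "D \<noteq> {}" "D \<subseteq> {0..<N}" and N: "N \<ge> 2"
  shows "cm_prop N D (distr (stream_space (measure_pmf (pmf_of_set D))) borel (sval N))"
proof -
  define p where "p = pmf_of_set D"
  define SS where "SS = stream_space (measure_pmf p)"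
  interpret ss: prob_space SS unfolding SS_def by (rule prob_space.prob_space_stream_space[OF prob_space_measure_pmf])
  have meas: "sval N \<in> borel_measurable SS" unfolding SS_def by (rule sval_meas[OF N])
  define \<mu> where "\<mu> = distr SS borel (sval N)"
  interpret mu: prob_space \<mu> unfolding \<mu>_def by (rule ss.prob_space_distr[OF meas])
  have spSS: "space SS = UNIV" unfolding SS_def by (simp add: space_stream_space)
  have spmu: "space \<mu> = UNIV" unfolding \<mu>_def by simp
  have eq: "measure \<mu> A = (\<Sum>d\<in>D. measure \<mu> (cmap N d -` A \<inter> space \<mu>)) / real (card D)"
    if A: "A \<in> sets borel" for A
  proof -
    have Apre: "sval N -` A \<inter> space SS \<in> sets SS" using meas A by measurable
    have "emeasure \<mu> A = emeasure SS (sval N -` A \<inter> space SS)"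
      unfolding \<mu>_def by (rule emeasure_distr[OF meas A])
    also have "\<dots> = (\<integral>\<^sup>+t. emeasure SS {x\<in>space SS. t ## x \<in> sval N -` A \<inter> space SS} \<partial>measure_pmf p)"
      unfolding SS_def by (rule prob_space.emeasure_stream_space[OF prob_space_measure_pmf]) (use Apre in \<open>simp add: SS_def\<close>)
    also have "\<dots> = (\<Sum>t\<in>D. emeasure SS {x\<in>space SS. t ## x \<in> sval N -` A \<inter> space SS} * ennreal (1 / real (card D)))"
      using D by (subst nn_integral_measure_pmf_finite) (auto simp: p_def)
    also have "\<dots> = (\<Sum>t\<in>D. ennreal (measure \<mu> (cmap N t -` A) / real (card D)))"
    proof (rule sum.cong[OF refl])
      fix t assume t: "t \<in> D"
      hence tN: "t < N" using D by auto
      have "{x\<in>space SS. t ## x \<in> sval N -` A \<inter> space SS} = sval N -` (cmap N t -` A) \<inter> space SS"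
        using sval_Cons[OF N tN] spSS by auto
      also have "emeasure SS \<dots> = emeasure \<mu> (cmap N t -` A)"
        unfolding \<mu>_def by (rule emeasure_distr[symmetric, OF meas]) (rule measurable_sets_borel[OF cmap_meas A])
      finally show "emeasure SS {x\<in>space SS. t ## x \<in> sval N -` A \<inter> space SS} * ennreal (1 / real (card D))
          = ennreal (measure \<mu> (cmap N t -` A) / real (card D))"
        by (simp add: mu.emeasure_eq_measure ennreal_mult'[symmetric] divide_inverse)
    qed
    also have "\<dots> = ennreal (\<Sum>d\<in>D. measure \<mu> (cmap N d -` A) / real (card D))"
      by (rule sum_ennreal) simp
    finally have "ennreal (measure \<mu> A) = ennreal (\<Sum>d\<in>D. measure \<mu> (cmap N d -` A) / real (card D))"
      by (simp add: mu.emeasure_eq_measure)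
    hence "measure \<mu> A = (\<Sum>d\<in>D. measure \<mu> (cmap N d -` A) / real (card D))"
      by (rule ennreal_inj[THEN iffD1, rotated 2]) (auto intro: sum_nonneg)
    then show ?thesis by (simp add: spmu sum_divide_distrib)
  qed
  show ?thesis unfolding cm_prop_def
    using eq mu.prob_space_axioms by (simp add: \<mu>_def SS_def p_def)
qed

lemma cantor_measure_prop:
  assumes "cantor_data N D" shows "cm_prop N D (cantor_measure N D)"
proof -
  have D: "D \<subseteq> {0..<N}" and N: "N \<ge> 2" and Dne: "D \<noteq> {}" and fin: "finite D"
    using assms unfolding cantor_data_def by (auto intro: finite_subset)
  have ex: "cm_prop N D (distr (stream_space (measure_pmf (pmf_of_set D))) borel (sval N))"
    by (rule cm_prop_exists[OF fin Dne D N])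
  have "cantor_measure N D = (THE \<mu>. cm_prop N D \<mu>)"
    unfolding cantor_measure_def cm_prop_def ..
  also have "\<dots> = distr (stream_space (measure_pmf (pmf_of_set D))) borel (sval N)"
    by (rule the_equality[where P="cm_prop N D", OF ex]) (use cm_prop_unique[OF _ ex fin Dne N] in blast)
  finally show ?thesis using ex by simp
qed

lemma cos_2pi_frac: "cos (2 * pi * u) = cos (2 * pi * frac u)"
proof -
  have "2 * pi * u = 2 * pi * frac u + 2 * pi * real_of_int \<lfloor>u\<rfloor>"
    by (simp add: frac_def algebra_simps)
  then show ?thesis by (simp add: cos_add cos_int_2pin sin_int_2pin)
qed

lemma cos_frac_bound:
  assumes a: "0 \<le> a" "a \<le> 1/2" and u: "frac u \<in> {a..1-a}"
  shows "cos (2 * pi * u) \<le> cos (2 * pi * a)"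
proof -
  define v where "v = frac u"
  have v: "a \<le> v" "v \<le> 1 - a" using u by (auto simp: v_def)
  show ?thesis
  proof (cases "v \<le> 1/2")
    case True
    have "cos (2 * pi * v) \<le> cos (2 * pi * a)"
      by (rule cos_monotone_0_pi_le) (use a v True in \<open>auto intro: mult_left_mono\<close>)
    then show ?thesis by (simp add: cos_2pi_frac[of u] v_def)
  next
    case False
    have "cos (2 * pi * (1 - v)) \<le> cos (2 * pi * a)"
      by (rule cos_monotone_0_pi_le) (use a v False in \<open>auto intro: mult_left_mono\<close>)
    moreover have "cos (2 * pi * (1 - v)) = cos (2 * pi * v)"
      by (simp add: right_diff_distrib cos_diff)
    ultimately show ?thesis by (simp add: cos_2pi_frac[of u] v_def)
  qed
qed

lemma cmod_1_iexp: "cmod (1 + iexp \<theta>) = sqrt (2 + 2 * cos \<theta>)"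
proof -
  have "1 + iexp \<theta> = Complex (1 + cos \<theta>) (sin \<theta>)"
    by (simp flip: cis_conv_exp add: complex_eq_iff)
  hence "cmod (1 + iexp \<theta>) = sqrt ((1 + cos \<theta>)\<^sup>2 + (sin \<theta>)\<^sup>2)"
    by (simp add: cmod_def)
  also have "(1 + cos \<theta>)\<^sup>2 + (sin \<theta>)\<^sup>2 = 2 + 2 * cos \<theta>"
    using sin_cos_squared_add[of \<theta>] by (simp add: power2_eq_square algebra_simps)
  finally show ?thesis .
qed

definition mB :: "nat set \<Rightarrow> real \<Rightarrow> complex" where
  "mB B s = (\<Sum>d\<in>B. iexp (2 * pi * s * real d)) / real (card B)"

definition rhoB :: "nat \<Rightarrow> nat set \<Rightarrow> real" where
  "rhoB M B = (real (card B) - 2 + sqrt (2 + 2 * cos (2 * pi * (1 / (4 * real M))))) / real (card B)"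

lemma mB_le1: assumes "finite B" "B \<noteq> {}" shows "cmod (mB B s) \<le> 1"
proof -
  have "cmod (\<Sum>d\<in>B. iexp (2 * pi * s * real d)) \<le> (\<Sum>d\<in>B. cmod (iexp (2 * pi * s * real d)))" by (rule norm_sum)
  also have "\<dots> = real (card B)" by simp
  finally have "cmod (\<Sum>d\<in>B. iexp (2 * pi * s * real d)) \<le> real (card B)" .
  moreover have "card B > 0" using assms by (simp add: card_gt_0_iff)
  ultimately show ?thesis by (simp add: mB_def norm_divide divide_le_eq_1)
qed

lemma mB_good:
  assumes B: "finite B" and b: "b0 \<in> B" "b1 \<in> B" "b0 < b1" and M: "M \<ge> 3"
    and good: "frac (real (b1 - b0) * s) \<in> {1 / (4 * real M)..1 - 1 / (4 * real M)}"
  shows "cmod (mB B s) \<le> rhoB M B"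
proof -
  define a where "a = 1 / (4 * real M)"
  have a: "0 \<le> a" "a \<le> 1/2" using M by (auto simp: a_def field_simps)
  define E where "E d = iexp (2 * pi * s * real d)" for d
  have Bsplit: "B = insert b0 (insert b1 (B - {b0, b1}))" using b by auto
  have "(\<Sum>d\<in>B. E d) = E b0 + E b1 + (\<Sum>d\<in>B - {b0, b1}. E d)"
    using B b by (subst Bsplit) (simp add: sum.insert_remove)
  hence "cmod (\<Sum>d\<in>B. E d) \<le> cmod (E b0 + E b1) + cmod (\<Sum>d\<in>B - {b0, b1}. E d)"
    by (metis norm_triangle_ineq)
  also have "cmod (\<Sum>d\<in>B - {b0, b1}. E d) \<le> (\<Sum>d\<in>B - {b0, b1}. cmod (E d))" by (rule norm_sum)
  also have "\<dots> = real (card B) - 2"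
  proof -
    have "card {b0, b1} \<le> card B" using B b by (intro card_mono) auto
    hence "card B \<ge> 2" using b by simp
    then show ?thesis using B b by (simp add: E_def card_Diff_subset of_nat_diff)
  qed
  also have "E b0 + E b1 = E b0 * (1 + iexp (2 * pi * (real (b1 - b0) * s)))"
    using b by (simp add: E_def algebra_simps of_nat_diff flip: exp_add)
  also have "cmod \<dots> = sqrt (2 + 2 * cos (2 * pi * (real (b1 - b0) * s)))"
    by (simp only: norm_mult cmod_1_iexp) (simp add: E_def)
  also have "\<dots> \<le> sqrt (2 + 2 * cos (2 * pi * a))"
    using cos_frac_bound[OF a good[folded a_def]] by simp
  finally have "cmod (\<Sum>d\<in>B. E d) \<le> real (card B) - 2 + sqrt (2 + 2 * cos (2 * pi * a))" by simp
  moreover have "card B > 0" using B b by (auto simp: card_gt_0_iff)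
  ultimately show ?thesis
    by (simp add: mB_def rhoB_def a_def E_def norm_divide divide_right_mono)
qed

lemma rhoB_lt1:
  assumes M: "M \<ge> 3" and B: "card B \<ge> 2" shows "rhoB M B < 1" "0 \<le> rhoB M B"
proof -
  define a where "a = 1 / (4 * real M)"
  have a: "0 < a" "a \<le> 1/2" using M by (auto simp: a_def field_simps)
  have "cos (2 * pi * a) < cos 0"
    by (rule cos_monotone_0_pi) (use a in auto)
  hence "2 + 2 * cos (2 * pi * a) < 4" by simp
  hence "sqrt (2 + 2 * cos (2 * pi * a)) < sqrt 4" by (simp only: real_sqrt_less_iff)
  hence s2: "sqrt (2 + 2 * cos (2 * pi * a)) < 2" by simp
  have cB: "real (card B) \<ge> 2" using B by simp
  show "rhoB M B < 1" using s2 cB unfolding rhoB_def a_def[symmetric] by (simp add: divide_less_eq)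
  have "0 \<le> 2 + 2 * cos (2 * pi * a)" using cos_ge_minus_one[of "2 * pi * a"] by linarith
  hence "0 \<le> sqrt (2 + 2 * cos (2 * pi * a))" by simp
  then show "0 \<le> rhoB M B" using cB unfolding rhoB_def a_def[symmetric] by (intro divide_nonneg_nonneg) auto
qed

lemma char_step:
  assumes P: "cm_prop M B \<nu>" and B: "finite B" "B \<noteq> {}" and M: "M > 0"
  shows "char \<nu> (2 * pi * t) = mB B (t / real M) * char \<nu> (2 * pi * (t / real M))"
  using cm_prop_char[OF P B M, of "2 * pi * t"] by (simp add: mB_def mult.assoc)

lemma char_iter:
  assumes P: "cm_prop M B \<nu>" and B: "finite B" "B \<noteq> {}" and M: "M > 0"
  shows "char \<nu> (2 * pi * t) = (\<Prod>i<I. mB B (t / real M ^ Suc i)) * char \<nu> (2 * pi * (t / real M ^ I))"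
proof (induction I)
  case (Suc I)
  have "char \<nu> (2 * pi * (t / real M ^ I)) = mB B (t / real M ^ I / real M) * char \<nu> (2 * pi * (t / real M ^ I / real M))"
    by (rule char_step[OF P B M])
  with Suc show ?case by (simp add: field_simps)
qed simp

lemma char_bound:
  assumes P: "cm_prop M B \<nu>" and B: "finite B" and b: "b0 \<in> B" "b1 \<in> B" "b0 < b1" and M: "M \<ge> 3"
    and S: "finite S"
    and good: "\<And>i. i \<in> S \<Longrightarrow> frac (real (b1 - b0) * (t / real M ^ Suc i)) \<in> {1 / (4 * real M)..1 - 1 / (4 * real M)}"
  shows "cmod (char \<nu> (2 * pi * t)) \<le> rhoB M B ^ card S"
proof -
  have Bne: "B \<noteq> {}" using b by auto
  interpret real_distribution \<nu> using P by (rule cm_prop_real_distribution)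
  obtain I where I: "S \<subseteq> {..<I}" using S by (meson finite_nat_bounded)
  have "cmod (char \<nu> (2 * pi * t)) = (\<Prod>i<I. cmod (mB B (t / real M ^ Suc i))) * cmod (char \<nu> (2 * pi * (t / real M ^ I)))"
    using char_iter[OF P B Bne, of t I] M by (simp add: norm_mult prod_norm)
  also have "\<dots> \<le> (\<Prod>i<I. cmod (mB B (t / real M ^ Suc i))) * 1"
    by (intro mult_left_mono cmod_char_le_1 prod_nonneg) auto
  also have "\<dots> \<le> (\<Prod>i<I. if i \<in> S then rhoB M B else 1)"
    using mB_good[OF B b M good] mB_le1[OF B Bne] by (auto intro!: prod_mono)
  also have "\<dots> = rhoB M B ^ card S"
    using I by (simp add: prod.If_cases Int_absorb1 Int_absorb2 subset_eq)
  finally show ?thesis .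
qed

lemma char_neg: "char \<nu> (- t) = cnj (char \<nu> t)"
proof -
  have "(\<lambda>x. iexp (- t * x)) = (\<lambda>x. cnj (iexp (t * x)))"
    by (auto simp: exp_cnj)
  then show ?thesis unfolding char_def by simp
qed

lemma approx_power_ratio:
  fixes M N :: nat and \<tau> \<eta> :: real and J :: nat
  assumes M: "M \<ge> 2" and N: "N \<ge> 2" and irr: "ln (real N) / ln (real M) \<notin> \<rat>"
    and \<tau>: "1 \<le> \<tau>" "\<tau> < real M" and \<eta>: "\<eta> > 0"
  shows "\<exists>k j. j \<ge> J \<and> \<bar>real N ^ k / real M ^ j - \<tau>\<bar> < \<eta>"
proof -
  have lnM: "ln (real M) > 0" using M by simp
  have lnN: "ln (real N) > 0" using N by simp
  define \<alpha> where "\<alpha> = ln (real N) / ln (real M)"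
  have \<alpha>: "\<alpha> > 0" using lnM lnN by (simp add: \<alpha>_def)
  define \<beta> where "\<beta> = ln \<tau> / ln (real M)"
  have \<beta>: "0 \<le> \<beta>" "\<beta> < 1" using \<tau> lnM M
    by (auto simp: \<beta>_def divide_less_eq)
  have Mb: "real M powr \<beta> = \<tau>" using \<tau> M lnM by (simp add: \<beta>_def powr_def)
  have "isCont (\<lambda>f. real M powr f) \<beta>" using M by (intro continuous_intros) auto
  then obtain \<delta> where \<delta>: "\<delta> > 0" and \<delta>': "\<And>f. \<bar>f - \<beta>\<bar> < \<delta> \<Longrightarrow> \<bar>real M powr f - \<tau>\<bar> < \<eta>"
    using \<eta> Mb unfolding isCont_def LIM_def dist_real_def
    by (metis abs_zero cancel_comm_monoid_add_class.diff_cancel)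
  obtain K1 where K1: "real M ^ Suc J < real N ^ K1" using real_arch_pow[of "real N" "real M ^ Suc J"] N by auto
  have K1pos: "K1 > 0"
  proof (rule ccontr)
    assume "\<not> K1 > 0" hence "K1 = 0" by simp
    with K1 have "real M ^ Suc J < 1" by simp
    moreover have "1 \<le> real M ^ Suc J" using M by (intro one_le_power) simp
    ultimately show False by simp
  qed
  define \<theta> where "\<theta> = real K1 * \<alpha>"
  have irr\<theta>: "\<theta> \<notin> \<rat>"
  proof
    assume "\<theta> \<in> \<rat>"
    hence "\<theta> / real K1 \<in> \<rat>" by (intro Rats_divide) auto
    hence "\<alpha> \<in> \<rat>" using K1pos by (simp add: \<theta>_def)
    thus False using irr by (simp add: \<alpha>_def)
  qed
  obtain k' where k': "k' > 0" "\<bar>frac (real k' * \<theta>) - \<beta>\<bar> < \<delta>"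
    using Kronecker_approx_1_explicit[OF irr\<theta>, of \<beta> \<delta>] \<beta> \<delta> by auto
  define k where "k = k' * K1"
  have kth: "real k * \<alpha> = real k' * \<theta>" by (simp add: k_def \<theta>_def)
  define f where "f = frac (real k * \<alpha>)"
  define j where "j = nat \<lfloor>real k * \<alpha>\<rfloor>"
  have fl0: "\<lfloor>real k * \<alpha>\<rfloor> \<ge> 0" using \<alpha> by simp
  have kaj: "real k * \<alpha> = real j + f"
    using fl0 by (simp add: j_def f_def frac_def)
  have f01: "0 \<le> f" "f < 1" by (auto simp: f_def frac_lt_1)
  have Nk: "real N ^ k = real M powr (real k * \<alpha>)"
    using lnM lnN M N by (simp add: powr_def \<alpha>_def powr_realpow[symmetric] ln_realpow)
  also have "\<dots> = real M ^ j * real M powr f"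
    using M by (simp add: kaj powr_add powr_realpow)
  finally have Nk': "real N ^ k = real M ^ j * real M powr f" .
  have ratio: "real N ^ k / real M ^ j = real M powr f" using Nk' M by simp
  have close: "\<bar>real N ^ k / real M ^ j - \<tau>\<bar> < \<eta>"
    unfolding ratio by (rule \<delta>') (use k' kth in \<open>simp add: f_def\<close>)
  have "real N ^ K1 \<le> real N ^ k" using N k' by (intro power_increasing) (auto simp: k_def)
  hence "real M ^ Suc J < real M ^ j * real M powr f" using K1 Nk' by simp
  also have "\<dots> \<le> real M ^ j * real M"
  proof -
    have "real M powr f \<le> real M powr 1" using M f01 by (intro powr_mono) auto
    then show ?thesis using M by (intro mult_left_mono) auto
  qed
  finally have "real M ^ Suc J < real M ^ Suc j" by (simp add: mult.commute)
  hence "Suc J < Suc j" using M by (simp add: power_strict_increasing_iff)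
  hence "j \<ge> J" by simp
  with close show ?thesis by blast
qed

lemma tau_decomp:
  fixes M T D e t :: nat
  assumes M: "M \<ge> 2" and t: "1 \<le> t" "t \<le> T" and eD: "e \<le> D" and et: "e \<le> t * D"
  shows "\<exists>Z::nat. \<exists>tl. real M ^ (t * D - e) * (1 + (\<Sum>t'\<in>{1..T}. 1 / real M ^ (t' * D)))
            = real Z + 1 / real M ^ e + tl \<and> 0 \<le> tl \<and> tl \<le> real T / (real M ^ e * real M ^ D)"
proof -
  define c where "c = t * D - e"
  have M0: "real M \<noteq> 0" using M by simp
  have split: "{1..T} = {1..<t} \<union> ({t} \<union> {t<..T})" using t by auto
  have sumsplit: "(\<Sum>t'\<in>{1..T}. F t') = (\<Sum>t'\<in>{1..<t}. F t') + (F t + (\<Sum>t'\<in>{t<..T}. F t'))" for F :: "nat \<Rightarrow> real"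
    by (subst split, subst sum.union_disjoint) (auto simp: sum.union_disjoint)
  define tl where "tl = (\<Sum>t'\<in>{t<..T}. real M ^ c / real M ^ (t' * D))"
  define Z where "Z = M ^ c + (\<Sum>t'\<in>{1..<t}. M ^ (c - t' * D))"
  have low: "real M ^ c / real M ^ (t' * D) = real (M ^ (c - t' * D))" if t': "t' \<in> {1..<t}" for t'
  proof -
    have "(t' + 1) * D \<le> t * D" using t' by (intro mult_right_mono) auto
    hence le: "t' * D \<le> c" using eD by (simp add: c_def algebra_simps)
    have "real (M ^ (c - t' * D)) = real M ^ (c - t' * D)" by simp
    also have "\<dots> = real M ^ c / real M ^ (t' * D)" by (rule power_diff[OF M0 le])
    finally show ?thesis by simp
  qed
  have mid: "real M ^ c / real M ^ (t * D) = 1 / real M ^ e"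
  proof -
    have "t * D = c + e" using et by (simp add: c_def)
    then show ?thesis using M0 by (simp add: power_add)
  qed
  have hi: "real M ^ c / real M ^ (t' * D) \<le> 1 / (real M ^ e * real M ^ D)" if t': "t' \<in> {t<..T}" for t'
  proof -
    have "(t + 1) * D \<le> t' * D" using t' by (intro mult_right_mono) auto
    hence eqe: "t' * D = c + e + D + (t' * D - t * D - D)" using et by (simp add: c_def algebra_simps)
    have "real M ^ (t' * D) = real M ^ (c + e + D + (t' * D - t * D - D))"
      by (subst eqe) (rule refl)
    also have "\<dots> = real M ^ c * (real M ^ e * real M ^ D) * real M ^ (t' * D - t * D - D)"
      by (simp only: power_add mult_ac)
    finally have "real M ^ (t' * D) = real M ^ c * (real M ^ e * real M ^ D) * real M ^ (t' * D - t * D - D)" .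
    hence "real M ^ c / real M ^ (t' * D) = 1 / (real M ^ e * real M ^ D) / real M ^ (t' * D - t * D - D)"
      using M0 by (simp add: field_simps)
    also have "\<dots> \<le> 1 / (real M ^ e * real M ^ D)"
    proof -
      have "1 \<le> real M ^ (t' * D - t * D - D)" using M by (intro one_le_power) simp
      moreover have "0 \<le> 1 / (real M ^ e * real M ^ D)" by simp
      ultimately show ?thesis using divide_left_mono[of 1 "real M ^ (t' * D - t * D - D)" "1 / (real M ^ e * real M ^ D)"] M
        by (simp del: divide_divide_eq_left)
    qed
    finally show ?thesis .
  qed
  have tl0: "0 \<le> tl" unfolding tl_def by (intro sum_nonneg) auto
  have "tl \<le> (\<Sum>t'\<in>{t<..T}. 1 / (real M ^ e * real M ^ D))" unfolding tl_def by (intro sum_mono hi)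
  also have "\<dots> = real (card {t<..T}) / (real M ^ e * real M ^ D)" by simp
  also have "\<dots> \<le> real T / (real M ^ e * real M ^ D)"
    using M by (intro divide_right_mono) auto
  finally have tlT: "tl \<le> real T / (real M ^ e * real M ^ D)" .
  have "real M ^ c * (1 + (\<Sum>t'\<in>{1..T}. 1 / real M ^ (t' * D)))
      = real M ^ c + (\<Sum>t'\<in>{1..T}. real M ^ c / real M ^ (t' * D))"
    by (simp add: algebra_simps sum_distrib_left)
  also have "\<dots> = real M ^ c + ((\<Sum>t'\<in>{1..<t}. real M ^ c / real M ^ (t' * D)) + (real M ^ c / real M ^ (t * D) + tl))"
    by (subst sumsplit) (simp only: tl_def)
  also have "(\<Sum>t'\<in>{1..<t}. real M ^ c / real M ^ (t' * D)) = (\<Sum>t'\<in>{1..<t}. real (M ^ (c - t' * D)))"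
    by (intro sum.cong refl low)
  finally have "real M ^ c * (1 + (\<Sum>t'\<in>{1..T}. 1 / real M ^ (t' * D))) = real Z + 1 / real M ^ e + tl"
    by (simp add: mid Z_def)
  then show ?thesis using tl0 tlT unfolding c_def by blast
qed

lemma frac_window:
  fixes v u err z :: real and M :: nat
  assumes M: "M \<ge> 3" and z: "z \<in> \<int>" and v: "v = z + u + err"
    and u: "1 / (2 * real M) \<le> \<bar>u\<bar>" "\<bar>u\<bar> < 1/2" and err: "\<bar>err\<bar> \<le> 1 / (4 * real M)"
  shows "frac v \<in> {1 / (4 * real M)..1 - 1 / (4 * real M)}"
proof -
  define a where "a = 1 / (4 * real M)"
  have Mr: "real M \<ge> 3" using M by simp
  have a2: "1 / (2 * real M) = 2 * a" by (simp add: a_def)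
  have a0: "0 < a" "a \<le> 1/12" using Mr by (auto simp: a_def divide_le_eq)
  have e1: "-a \<le> err" "err \<le> a" using err by (auto simp: a_def)
  show ?thesis
  proof (cases "u \<ge> 0")
    case True
    have u1: "2 * a \<le> u" "u < 1/2" using u True a2 by auto
    have "frac v = u + err"
    proof -
      have "v - (u + err) = z" by (simp add: v)
      then show ?thesis unfolding frac_unique_iff using z u1 e1 a0 by simp
    qed
    then show ?thesis using u1 e1 a0 by (simp add: a_def[symmetric])
  next
    case False
    have u1: "u \<le> -2 * a" "-1/2 < u" using u False a2 by auto
    have "frac v = u + err + 1"
    proof -
      have eq: "v - (u + err + 1) = z - 1" by (simp add: v)
      have "z - 1 \<in> \<int>" using z by simp
      hence "v - (u + err + 1) \<in> \<int>" by (simp only: eq)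
      then show ?thesis unfolding frac_unique_iff using u1 e1 a0 by simp
    qed
    then show ?thesis using u1 e1 a0 by (simp add: a_def[symmetric])
  qed
qed

lemma abs3: "\<bar>a\<bar> \<le> r \<Longrightarrow> \<bar>b\<bar> \<le> r \<Longrightarrow> \<bar>c\<bar> \<le> r \<Longrightarrow> \<bar>a + b - c\<bar> \<le> 3 * (r::real)"
  by linarith

lemma many_good:
  fixes M N :: nat and G :: "int set" and R :: real and T :: nat
  assumes M: "M \<ge> 3" and N: "N \<ge> 2" and irr: "ln (real N) / ln (real M) \<notin> \<rat>"
    and G: "finite G" "0 \<notin> G"
  shows "\<exists>k. \<forall>g\<in>G. \<forall>A::int. \<bar>real_of_int A\<bar> \<le> R \<longrightarrow>
           (\<exists>S. finite S \<and> card S = T \<and>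
              (\<forall>i\<in>S. frac (real_of_int (g * int N ^ k - A) / real M ^ Suc i)
                        \<in> {1 / (4 * real M)..1 - 1 / (4 * real M)}))"
proof (cases "G = {}")
  case True then show ?thesis by simp
next
  case Gne: False
  have Mr: "real M \<ge> 3" using M by simp
  have M1: "real M > 1" using Mr by simp
  define ee where "ee g = (LEAST e::nat. 2 * \<bar>real_of_int g\<bar> < real M ^ e)" for g :: int
  have ee_ex: "\<exists>e::nat. 2 * \<bar>real_of_int g\<bar> < real M ^ e" for g :: int
    using real_arch_pow[OF M1] by blast
  have ee1: "2 * \<bar>real_of_int g\<bar> < real M ^ ee g" for g
    unfolding ee_def by (rule LeastI_ex[OF ee_ex])
  have ee_pos: "ee g \<ge> 1" if "g \<noteq> 0" for g
  proof (rule ccontr)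
    assume "\<not> ee g \<ge> 1" hence "ee g = 0" by simp
    with ee1[of g] have "2 * \<bar>real_of_int g\<bar> < 1" by simp
    moreover have "(1::int) \<le> \<bar>g\<bar>" using that by linarith
    hence "\<bar>real_of_int g\<bar> \<ge> 1" by (metis of_int_1_le_iff of_int_abs)
    ultimately show False by simp
  qed
  have ee_low: "real M ^ (ee g - 1) \<le> 2 * \<bar>real_of_int g\<bar>" if "g \<noteq> 0" for g
  proof -
    have "ee g - 1 < ee g" using ee_pos[OF that] by simp
    hence "\<not> 2 * \<bar>real_of_int g\<bar> < real M ^ (ee g - 1)" unfolding ee_def by (rule not_less_Least)
    thus ?thesis by simp
  qed
  define E where "E = Max (ee ` G)"
  have eeE: "ee g \<le> E" if "g \<in> G" for g using G that unfolding E_def by (intro Max_ge) auto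
  define Gm where "Gm = Max ((\<lambda>g. \<bar>real_of_int g\<bar>) ` G)"
  have gGm: "\<bar>real_of_int g\<bar> \<le> Gm" if "g \<in> G" for g using G that unfolding Gm_def by (intro Max_ge) auto
  obtain g0 where g0: "g0 \<in> G" using Gne by blast
  have "g0 \<noteq> 0" using G g0 by auto
  hence "(1::int) \<le> \<bar>g0\<bar>" by linarith
  hence "1 \<le> \<bar>real_of_int g0\<bar>" by (metis of_int_1_le_iff of_int_abs)
  hence Gm1: "Gm \<ge> 1" using gGm[OF g0] by linarith
  define D where "D = E + T + 4"
  define \<tau> where "\<tau> = 1 + (\<Sum>t'\<in>{1..T}. 1 / real M ^ (t' * D))"
  have TMT: "real T < real M ^ T"
  proof -
    have "T < 2 ^ T" by (rule less_exp)
    hence "real T < 2 ^ T" by (metis of_nat_less_iff of_nat_numeral of_nat_power)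
    also have "(2::real) ^ T \<le> real M ^ T" using Mr by (intro power_mono) auto
    finally show ?thesis .
  qed
  have MD: "6 * real M * real T \<le> real M ^ D"
  proof -
    have "6 * real M \<le> real M ^ 4"
    proof -
      have "6 \<le> real M ^ 3" using Mr power_mono[of 3 "real M" 3] by simp
      hence "real M * 6 \<le> real M * real M ^ 3" using Mr by (intro mult_left_mono) auto
      thus ?thesis by (simp add: power_Suc[symmetric] mult.commute)
    qed
    hence "6 * real M * real T \<le> real M ^ 4 * real M ^ T"
      using TMT by (intro mult_mono) auto
    also have "\<dots> \<le> real M ^ E * (real M ^ T * real M ^ 4)"
      using Mr by (simp add: mult.commute)
    finally show ?thesis by (simp add: D_def power_add mult_ac)
  qed
  have MD0: "real M ^ D > 0" using Mr by simp
  have sum_le: "(\<Sum>t'\<in>{1..T}. 1 / real M ^ (t' * D)) \<le> real T / real M ^ D"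
  proof -
    have "(\<Sum>t'\<in>{1..T}. 1 / real M ^ (t' * D)) \<le> (\<Sum>t'\<in>{1..T}. 1 / real M ^ D)"
    proof (intro sum_mono)
      fix t' assume "t' \<in> {1..T}"
      hence "D \<le> t' * D" by simp
      hence "real M ^ D \<le> real M ^ (t' * D)" using Mr by (intro power_increasing) auto
      then show "1 / real M ^ (t' * D) \<le> 1 / real M ^ D" using MD0 by (intro divide_left_mono) auto
    qed
    also have "\<dots> = real T / real M ^ D" by simp
    finally show ?thesis .
  qed
  have TMD: "real T / real M ^ D \<le> 1 / (6 * real M)"
    using MD MD0 Mr by (simp add: divide_le_eq field_simps)
  have \<tau>1: "1 \<le> \<tau>" unfolding \<tau>_def by (simp add: sum_nonneg)
  have \<tau>M: "\<tau> < real M"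
  proof -
    have "1 / (6 * real M) < 1" using Mr by simp
    with sum_le TMD have "\<tau> < 2" unfolding \<tau>_def by linarith
    thus ?thesis using Mr by simp
  qed
  define \<eta> where "\<eta> = 1 / (12 * real M * Gm * real M ^ (T * D))"
  have \<eta>0: "\<eta> > 0" using Mr Gm1 by (simp add: \<eta>_def)
  obtain J1 where J1: "12 * real M * R < real M ^ J1" using real_arch_pow[OF M1] by blast
  obtain k j where j: "j \<ge> T * D + J1" and close: "\<bar>real N ^ k / real M ^ j - \<tau>\<bar> < \<eta>"
    using approx_power_ratio[of M N \<tau> \<eta> "T * D + J1"] M N irr \<tau>1 \<tau>M \<eta>0 by auto
  define x where "x = real N ^ k / real M ^ j"
  have Nk: "real N ^ k = x * real M ^ j" using Mr by (simp add: x_def)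
  show ?thesis
  proof (intro exI[of _ k] ballI allI impI)
    fix g A assume g: "g \<in> G" and A: "\<bar>real_of_int A\<bar> \<le> R"
    have g0: "g \<noteq> 0" using g G by auto
    define e where "e = ee g"
    have e1: "e \<ge> 1" using ee_pos[OF g0] by (simp add: e_def)
    have eD: "e \<le> D" using eeE[OF g] by (simp add: e_def D_def)
    define S where "S = (\<lambda>t. j + e - t * D - 1) ` {1..T}"
    have tD: "t * D \<le> T * D" if "t \<in> {1..T}" for t using that by (intro mult_right_mono) auto
    have inj: "inj_on (\<lambda>t. j + e - t * D - 1) {1..T}"
    proof (rule inj_onI)
      fix t1 t2 assume t1: "t1 \<in> {1..T}" and t2: "t2 \<in> {1..T}" and eq: "j + e - t1 * D - 1 = j + e - t2 * D - 1"
      have "t1 * D \<le> j" "t2 * D \<le> j" using tD[OF t1] tD[OF t2] j by linarith+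
      hence "t1 * D = t2 * D" using eq e1 by linarith
      thus "t1 = t2" by (simp add: D_def)
    qed
    have cardS: "card S = T" unfolding S_def using card_image[OF inj] by simp
    have good: "frac (real_of_int (g * int N ^ k - A) / real M ^ Suc i) \<in> {1 / (4 * real M)..1 - 1 / (4 * real M)}"
      if i: "i \<in> S" for i
    proof -
      obtain t where t: "t \<in> {1..T}" and it: "i = j + e - t * D - 1" using i unfolding S_def by blast
      have tDj: "t * D \<le> j" using tD[OF t] j by linarith
      have "D \<le> t * D" using t by simp
      hence etD: "e \<le> t * D" using eD by linarith
      define \<iota> where "\<iota> = j + e - t * D"
      define c where "c = t * D - e"
      have Si: "Suc i = \<iota>" using it tDj e1 by (simp add: \<iota>_def)
      have jic: "j = \<iota> + c" using tDj etD by (simp add: \<iota>_def c_def)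
      have iJ: "\<iota> \<ge> J1 + 1" using j tD[OF t] e1 unfolding \<iota>_def by linarith
      have cTD: "c \<le> T * D" using tD[OF t] unfolding c_def by linarith
      obtain Z :: nat and tl where Z: "real M ^ c * \<tau> = real Z + 1 / real M ^ e + tl"
        and tl: "0 \<le> tl" "tl \<le> real T / (real M ^ e * real M ^ D)"
        using tau_decomp[of M t T e D] M t eD etD unfolding \<tau>_def c_def by auto
      have Mi0: "real M ^ \<iota> > 0" using Mr by simp
      have Me0: "real M ^ e > 0" using Mr by simp
      have val: "real_of_int (g * int N ^ k - A) / real M ^ \<iota>
          = real_of_int (g * int Z) + real_of_int g / real M ^ e
            + (real_of_int g * tl + real_of_int g * real M ^ c * (x - \<tau>) - real_of_int A / real M ^ \<iota>)"
      proof -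
        have "real_of_int (g * int N ^ k - A) / real M ^ \<iota> = real_of_int g * (real N ^ k / real M ^ \<iota>) - real_of_int A / real M ^ \<iota>"
          by (simp add: diff_divide_distrib)
        also have "real N ^ k / real M ^ \<iota> = x * real M ^ c"
          using Mi0 Mr by (simp add: Nk jic power_add)
        also have "real_of_int g * (x * real M ^ c) = real_of_int g * (real M ^ c * \<tau>) + real_of_int g * real M ^ c * (x - \<tau>)"
          by (simp add: algebra_simps)
        also have "real M ^ c * \<tau> = real Z + 1 / real M ^ e + tl" by (rule Z)
        finally show ?thesis by (simp add: algebra_simps)
      qed
      have u_hi: "\<bar>real_of_int g / real M ^ e\<bar> < 1/2"
        using ee1[of g] Me0 by (simp add: e_def abs_divide divide_less_eq)
      have u_lo: "1 / (2 * real M) \<le> \<bar>real_of_int g / real M ^ e\<bar>"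
      proof -
        have "real M ^ e = real M * real M ^ (e - 1)" using e1 by (simp add: power_eq_if)
        also have "\<dots> \<le> real M * (2 * \<bar>real_of_int g\<bar>)" using ee_low[OF g0] Mr by (intro mult_left_mono) (auto simp: e_def)
        finally have "real M ^ e \<le> 2 * real M * \<bar>real_of_int g\<bar>" by simp
        then show ?thesis using Me0 Mr by (simp add: abs_divide field_simps)
      qed
      have err1: "\<bar>real_of_int g * tl\<bar> \<le> 1 / (12 * real M)"
      proof -
        have "\<bar>real_of_int g * tl\<bar> = \<bar>real_of_int g\<bar> / real M ^ e * (tl * real M ^ e)"
          using tl Me0 Mr by (simp add: abs_mult)
        also have "\<dots> \<le> (1/2) * (real T / real M ^ D)"
        proof (intro mult_mono)
          show "\<bar>real_of_int g\<bar> / real M ^ e \<le> 1/2" using u_hi by (simp add: abs_divide)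
          show "tl * real M ^ e \<le> real T / real M ^ D" using tl(2) Me0 Mr by (simp add: field_simps)
        qed (use tl Me0 in auto)
        also have "\<dots> \<le> (1/2) * (1 / (6 * real M))" using TMD by simp
        finally show ?thesis by simp
      qed
      have err2: "\<bar>real_of_int g * real M ^ c * (x - \<tau>)\<bar> \<le> 1 / (12 * real M)"
      proof -
        have "\<bar>real_of_int g * real M ^ c * (x - \<tau>)\<bar> = \<bar>real_of_int g\<bar> * real M ^ c * \<bar>x - \<tau>\<bar>"
          by (simp add: abs_mult)
        also have "\<dots> \<le> Gm * real M ^ (T * D) * \<eta>"
          using gGm[OF g] close Mr cTD by (intro mult_mono power_increasing) (auto simp: x_def)
        also have "\<dots> = 1 / (12 * real M)" using Gm1 Mr by (simp add: \<eta>_def)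
        finally show ?thesis .
      qed
      have err3: "\<bar>real_of_int A / real M ^ \<iota>\<bar> \<le> 1 / (12 * real M)"
      proof -
        have R0: "R \<ge> 0" using A by linarith
        have "real M ^ J1 \<le> real M ^ \<iota>" using iJ Mr by (intro power_increasing) auto
        have "\<bar>real_of_int A / real M ^ \<iota>\<bar> \<le> R / real M ^ \<iota>" using A Mi0 by (simp add: abs_divide divide_right_mono)
        also have "\<dots> \<le> R / real M ^ J1" using R0 \<open>real M ^ J1 \<le> real M ^ \<iota>\<close> Mr by (intro divide_left_mono) auto
        also have "\<dots> \<le> 1 / (12 * real M)" using J1 Mr by (simp add: divide_le_eq field_simps)
        finally show ?thesis .
      qed
      have err: "\<bar>real_of_int g * tl + real_of_int g * real M ^ c * (x - \<tau>) - real_of_int A / real M ^ \<iota>\<bar> \<le> 1 / (4 * real M)"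
        using abs3[OF err1 err2 err3] by simp
      show ?thesis unfolding Si
        by (rule frac_window[OF M _ val u_lo u_hi err]) simp
    qed
    show "\<exists>S. finite S \<and> card S = T \<and> (\<forall>i\<in>S. frac (real_of_int (g * int N ^ k - A) / real M ^ Suc i) \<in> {1 / (4 * real M)..1 - 1 / (4 * real M)})"
      using cardS good by (intro exI[of _ S]) (auto simp: S_def)
  qed
qed

lemma int_exp_sum:
  assumes "prob_space \<nu>" "sets \<nu> = sets borel" "finite Q"
  shows "(CLINT x|\<nu>. (\<Sum>u\<in>Q. w u * iexp (2 * pi * fr u * x))) = (\<Sum>u\<in>Q. w u * char \<nu> (2 * pi * fr u))"
proof -
  interpret prob_space \<nu> by fact
  have int: "integrable \<nu> (\<lambda>x. w u * iexp (2 * pi * fr u * x))" for u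
  proof (rule integrable_const_bound[where B="cmod (w u)"])
    show "AE x in \<nu>. cmod (w u * iexp (2 * pi * fr u * x)) \<le> cmod (w u)" by (simp add: norm_mult)
    show "(\<lambda>x. w u * iexp (2 * pi * fr u * x)) \<in> borel_measurable \<nu>"
      using assms(2) by (simp add: measurable_cong_sets[OF assms(2) refl])
  qed
  show ?thesis
    by (subst Bochner_Integration.integral_sum[OF int]) (simp add: char_def mult.assoc)
qed

lemma sq_expand:
  fixes w :: "'i \<Rightarrow> complex"
  assumes "finite Q"
  shows "complex_of_real ((cmod (\<Sum>u\<in>Q. w u * iexp (2 * pi * fr u * x)))\<^sup>2)
       = (\<Sum>p\<in>Q \<times> Q. (w (fst p) * cnj (w (snd p))) * iexp (2 * pi * (fr (fst p) - fr (snd p)) * x))"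
proof -
  have "complex_of_real ((cmod (\<Sum>u\<in>Q. w u * iexp (2 * pi * fr u * x)))\<^sup>2)
      = (\<Sum>u\<in>Q. w u * iexp (2 * pi * fr u * x)) * cnj (\<Sum>u\<in>Q. w u * iexp (2 * pi * fr u * x))"
    by (rule complex_norm_square)
  also have "\<dots> = (\<Sum>u\<in>Q. \<Sum>v\<in>Q. (w u * iexp (2 * pi * fr u * x)) * cnj (w v * iexp (2 * pi * fr v * x)))"
    by (simp add: sum_product cnj_sum)
  also have "\<dots> = (\<Sum>u\<in>Q. \<Sum>v\<in>Q. (w u * cnj (w v)) * iexp (2 * pi * (fr u - fr v) * x))"
  proof (intro sum.cong refl)
    fix u v
    have "cnj (iexp (2 * pi * fr v * x)) = iexp (- (2 * pi * fr v * x))" by (simp add: exp_cnj)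
    then show "(w u * iexp (2 * pi * fr u * x)) * cnj (w v * iexp (2 * pi * fr v * x)) = (w u * cnj (w v)) * iexp (2 * pi * (fr u - fr v) * x)"
      by (simp add: algebra_simps flip: exp_add)
  qed
  also have "\<dots> = (\<Sum>p\<in>Q \<times> Q. (w (fst p) * cnj (w (snd p))) * iexp (2 * pi * (fr (fst p) - fr (snd p)) * x))"
    unfolding sum.cartesian_product by (simp add: case_prod_beta)
  finally show ?thesis .
qed

lemma L2_upper:
  fixes w :: "'i \<Rightarrow> complex"
  assumes P: "prob_space \<nu>" "sets \<nu> = sets borel" and Q: "finite Q"
  shows "(\<integral>x. (cmod (\<Sum>u\<in>Q. w u * iexp (2 * pi * fr u * x)))\<^sup>2 \<partial>\<nu>)
      \<le> (\<Sum>p\<in>Q \<times> Q. cmod (w (fst p)) * cmod (w (snd p)) * cmod (char \<nu> (2 * pi * (fr (fst p) - fr (snd p)))))"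
proof -
  let ?I = "\<integral>x. (cmod (\<Sum>u\<in>Q. w u * iexp (2 * pi * fr u * x)))\<^sup>2 \<partial>\<nu>"
  have "complex_of_real ?I = (CLINT x|\<nu>. complex_of_real ((cmod (\<Sum>u\<in>Q. w u * iexp (2 * pi * fr u * x)))\<^sup>2))"
    by (rule integral_complex_of_real[symmetric])
  also have "\<dots> = (CLINT x|\<nu>. (\<Sum>p\<in>Q \<times> Q. (w (fst p) * cnj (w (snd p))) * iexp (2 * pi * (fr (fst p) - fr (snd p)) * x)))"
    by (simp only: sq_expand[OF Q])
  also have "\<dots> = (\<Sum>p\<in>Q \<times> Q. (w (fst p) * cnj (w (snd p))) * char \<nu> (2 * pi * (fr (fst p) - fr (snd p))))"
    by (rule int_exp_sum[OF P]) (use Q in simp)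
  finally have eq: "complex_of_real ?I = \<dots>" .
  have "?I \<ge> 0" by simp
  hence "?I = cmod (complex_of_real ?I)" by simp
  also have "\<dots> \<le> (\<Sum>p\<in>Q \<times> Q. cmod ((w (fst p) * cnj (w (snd p))) * char \<nu> (2 * pi * (fr (fst p) - fr (snd p)))))"
    unfolding eq by (rule norm_sum)
  also have "\<dots> = (\<Sum>p\<in>Q \<times> Q. cmod (w (fst p)) * cmod (w (snd p)) * cmod (char \<nu> (2 * pi * (fr (fst p) - fr (snd p)))))"
    by (simp add: norm_mult)
  finally show ?thesis .
qed

lemma L2_lower:
  fixes w :: "'i \<Rightarrow> complex"
  assumes P: "prob_space \<nu>" "sets \<nu> = sets borel" and Q: "finite Q" and Z: "Z \<in> sets borel"
    and low: "\<And>x. x \<in> Z \<Longrightarrow> \<eta> \<le> cmod (\<Sum>u\<in>Q. w u * iexp (2 * pi * fr u * x))" and \<eta>: "\<eta> \<ge> 0"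
  shows "\<eta>\<^sup>2 * measure \<nu> Z \<le> (\<integral>x. (cmod (\<Sum>u\<in>Q. w u * iexp (2 * pi * fr u * x)))\<^sup>2 \<partial>\<nu>)"
proof -
  interpret prob_space \<nu> by fact
  have sp: "space \<nu> = UNIV" using sets_eq_imp_space_eq[OF P(2)] by simp
  have Zs: "Z \<in> sets \<nu>" using Z P(2) by simp
  have meas: "(\<lambda>x. (cmod (\<Sum>u\<in>Q. w u * iexp (2 * pi * fr u * x)))\<^sup>2) \<in> borel_measurable \<nu>"
    by (simp add: measurable_cong_sets[OF P(2) refl])
  have bnd: "(cmod (\<Sum>u\<in>Q. w u * iexp (2 * pi * fr u * x)))\<^sup>2 \<le> (\<Sum>u\<in>Q. cmod (w u))\<^sup>2" for x
  proof -
    have "cmod (\<Sum>u\<in>Q. w u * iexp (2 * pi * fr u * x)) \<le> (\<Sum>u\<in>Q. cmod (w u * iexp (2 * pi * fr u * x)))" by (rule norm_sum)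
    also have "\<dots> = (\<Sum>u\<in>Q. cmod (w u))" by (simp add: norm_mult)
    finally show ?thesis by (intro power_mono) auto
  qed
  have int: "integrable \<nu> (\<lambda>x. (cmod (\<Sum>u\<in>Q. w u * iexp (2 * pi * fr u * x)))\<^sup>2)"
    by (rule integrable_const_bound[where B="(\<Sum>u\<in>Q. cmod (w u))\<^sup>2"]) (use meas bnd in auto)
  have "\<eta>\<^sup>2 * measure \<nu> Z = (\<integral>x. \<eta>\<^sup>2 * indicator Z x \<partial>\<nu>)"
    using Zs by simp
  also have "\<dots> \<le> (\<integral>x. (cmod (\<Sum>u\<in>Q. w u * iexp (2 * pi * fr u * x)))\<^sup>2 \<partial>\<nu>)"
  proof (rule integral_mono[OF _ int])
    show "integrable \<nu> (\<lambda>x. \<eta>\<^sup>2 * indicator Z x)"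
      using Zs by (intro integrable_mult_right integrable_real_indicator) (auto simp: emeasure_eq_measure)
    fix x
    show "\<eta>\<^sup>2 * indicator Z x \<le> (cmod (\<Sum>u\<in>Q. w u * iexp (2 * pi * fr u * x)))\<^sup>2"
      using low[of x] \<eta> by (auto simp: indicator_def intro: power_mono)
  qed
  finally show ?thesis .
qed

definition Poff :: "nat \<Rightarrow> (nat \<times> nat) set" where
  "Poff L = {p \<in> {..L} \<times> {..L}. fst p \<noteq> snd p}"

definition cL :: "nat \<Rightarrow> nat \<times> nat \<Rightarrow> real" where
  "cL L p = real (L choose fst p) * real (L choose snd p)"

definition hL :: "nat \<times> nat \<Rightarrow> int" where
  "hL p = int (fst p) - int (snd p)"

lemma finite_Poff: "finite (Poff L)" unfolding Poff_def by simp

lemma kernel_full: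
  "(\<Sum>p\<in>{..L}\<times>{..L}. complex_of_real (cL L p) * iexp (2 * pi * real_of_int (hL p) * u))
     = complex_of_real ((2 + 2 * cos (2 * pi * u)) ^ L)"
proof -
  define X where "X = iexp (2 * pi * u)"
  define Y where "Y = iexp (- (2 * pi * u))"
  have XY: "X * Y = 1" by (simp add: X_def Y_def flip: exp_add)
  have XpY: "X + Y = complex_of_real (2 * cos (2 * pi * u))"
  proof -
    have "X = cis (2 * pi * u)" by (simp add: X_def cis_conv_exp)
    moreover have "Y = cis (- (2 * pi * u))" by (simp add: Y_def cis_conv_exp)
    ultimately show ?thesis by (simp add: complex_eq_iff)
  qed
  have e: "iexp (2 * pi * real_of_int (hL p) * u) = X ^ fst p * Y ^ snd p" for p
  proof -
    have "iexp (2 * pi * real_of_int (hL p) * u) = exp (of_nat (fst p) * (\<i> * complex_of_real (2 * pi * u)) + of_nat (snd p) * (\<i> * complex_of_real (- (2 * pi * u))))"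
      by (simp add: hL_def algebra_simps)
    also have "\<dots> = X ^ fst p * Y ^ snd p"
      by (simp only: exp_add exp_of_nat_mult X_def Y_def)
    finally show ?thesis .
  qed
  have "(\<Sum>p\<in>{..L}\<times>{..L}. complex_of_real (cL L p) * iexp (2 * pi * real_of_int (hL p) * u))
      = (\<Sum>a\<le>L. \<Sum>b\<le>L. (of_nat (L choose a) * X ^ a) * (of_nat (L choose b) * Y ^ b))"
    unfolding sum.cartesian_product e by (intro sum.cong refl) (auto simp: cL_def)
  also have "\<dots> = (\<Sum>a\<le>L. of_nat (L choose a) * X ^ a) * (\<Sum>b\<le>L. of_nat (L choose b) * Y ^ b)"
    by (simp add: sum_product)
  also have "(\<Sum>a\<le>L. of_nat (L choose a) * X ^ a) = (X + 1) ^ L"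
    by (simp add: binomial_ring)
  also have "(\<Sum>b\<le>L. of_nat (L choose b) * Y ^ b) = (Y + 1) ^ L"
    by (simp add: binomial_ring)
  also have "(X + 1) ^ L * (Y + 1) ^ L = ((X + 1) * (Y + 1)) ^ L" by (simp add: power_mult_distrib)
  also have "(X + 1) * (Y + 1) = 2 + (X + Y)" using XY by (simp add: algebra_simps)
  also have "\<dots> = complex_of_real (2 + 2 * cos (2 * pi * u))" by (simp add: XpY)
  finally show ?thesis by simp
qed

lemma kernel_off:
  "(\<Sum>p\<in>Poff L. complex_of_real (cL L p) * iexp (2 * pi * real_of_int (hL p) * u))
     = complex_of_real ((2 + 2 * cos (2 * pi * u)) ^ L - real ((2 * L) choose L))"
proof -
  define F where "F p = complex_of_real (cL L p) * iexp (2 * pi * real_of_int (hL p) * u)" for p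
  have fin: "finite ({..L}\<times>{..L})" by simp
  have "(\<Sum>p\<in>{..L}\<times>{..L}. F p) = (\<Sum>p\<in>{..L}\<times>{..L}. (if fst p \<noteq> snd p then F p else 0)) + (\<Sum>p\<in>{..L}\<times>{..L}. (if fst p = snd p then F p else 0))"
    by (subst sum.distrib[symmetric]) (intro sum.cong refl, auto)
  also have "(\<Sum>p\<in>{..L}\<times>{..L}. (if fst p \<noteq> snd p then F p else 0)) = (\<Sum>p\<in>Poff L. F p)"
    unfolding Poff_def by (rule sum.inter_filter[OF fin, symmetric])
  also have "(\<Sum>p\<in>{..L}\<times>{..L}. (if fst p = snd p then F p else 0)) = (\<Sum>a\<le>L. \<Sum>b\<le>L. (if a = b then complex_of_real (real (L choose a) ^ 2) else 0))"
    unfolding sum.cartesian_product by (intro sum.cong refl) (auto simp: F_def hL_def cL_def power2_eq_square)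
  also have "\<dots> = (\<Sum>a\<le>L. complex_of_real (real (L choose a) ^ 2))"
    by (simp add: sum.delta)
  also have "\<dots> = complex_of_real (real ((2 * L) choose L))"
  proof -
    have "(\<Sum>a\<le>L. real (L choose a) ^ 2) = real (\<Sum>a\<le>L. (L choose a) ^ 2)" by simp
    also have "\<dots> = real ((2 * L) choose L)" by (simp only: choose_square_sum)
    finally show ?thesis by (metis of_real_sum)
  qed
  finally have "(\<Sum>p\<in>{..L}\<times>{..L}. F p) = (\<Sum>p\<in>Poff L. F p) + complex_of_real (real ((2 * L) choose L))" .
  with kernel_full[of L u] show ?thesis unfolding F_def by (simp add: algebra_simps)
qed

lemma central_binom_lower: "4 ^ L \<le> (2 * L + 1) * ((2 * L) choose L)"
proof -
  have "(4::nat) ^ L = 2 ^ (2 * L)" by (simp add: power_mult)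
  also have "\<dots> = (\<Sum>k\<le>2 * L. (2 * L) choose k)" by (simp add: choose_row_sum)
  also have "\<dots> \<le> (\<Sum>k\<le>2 * L. (2 * L) choose L)" by (intro sum_mono binomial_maximum')
  also have "\<dots> = (2 * L + 1) * ((2 * L) choose L)" by simp
  finally show ?thesis .
qed

lemma choose_L:
  fixes \<beta> :: real assumes "0 \<le> \<beta>" "\<beta> < 4"
  shows "\<exists>L. \<beta> ^ L < real ((2 * L) choose L)"
proof -
  define r where "r = \<beta> / 4"
  have r: "0 \<le> r" "r < 1" using assms by (auto simp: r_def)
  have t1: "(\<lambda>n. real n * r ^ n) \<longlonglongrightarrow> 0" using r by (intro powser_times_n_limit_0) simp
  have t2: "(\<lambda>n. r ^ n) \<longlonglongrightarrow> 0" using r by (intro LIMSEQ_power_zero) auto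
  have "(\<lambda>n. 2 * (real n * r ^ n) + r ^ n) \<longlonglongrightarrow> 2 * 0 + 0"
    by (rule tendsto_add[OF tendsto_mult_left[OF t1] t2])
  hence "(\<lambda>n. (2 * real n + 1) * r ^ n) \<longlonglongrightarrow> 0" by (simp add: algebra_simps)
  then obtain L where L: "\<bar>(2 * real L + 1) * r ^ L\<bar> < 1"
    using LIMSEQ_D[of _ 0 1] by fastforce
  hence L': "(2 * real L + 1) * r ^ L < 1" by linarith
  have "\<beta> ^ L = r ^ L * 4 ^ L" by (simp add: r_def power_divide)
  also have "\<dots> \<le> r ^ L * ((2 * real L + 1) * real ((2 * L) choose L))"
  proof -
    have "real (4 ^ L) \<le> real ((2 * L + 1) * ((2 * L) choose L))"
      using central_binom_lower[of L] by (simp only: of_nat_le_iff)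
    thus ?thesis using r by (intro mult_left_mono) (auto simp: algebra_simps)
  qed
  also have "\<dots> = ((2 * real L + 1) * r ^ L) * real ((2 * L) choose L)" by simp
  also have "\<dots> < 1 * real ((2 * L) choose L)"
    using L' by (intro mult_strict_right_mono) (auto simp: zero_less_binomial_iff)
  finally show ?thesis by auto
qed

lemma Z_window:
  assumes C: "cantor_data N C" and j0: "j0 < N" "j0 \<notin> C" and x: "x \<in> cantor_set N C"
  shows "frac (real N ^ k * x - (2 * real j0 + 1) / (2 * real N)) \<in> {1 / (2 * real N)..1 - 1 / (2 * real N)}"
proof -
  note props = cantor_set_props[OF C]
  have N: "N \<ge> 3" using C unfolding cantor_data_def by simp
  have Nr: "real N \<ge> 3" using N by simp
  have "\<exists>y\<in>cantor_set N C. \<exists>m::int. real N ^ k * x = y + real_of_int m" for k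
  proof (induction k)
    case 0 then show ?case using x by (intro bexI[of _ x] exI[of _ 0]) auto
  next
    case (Suc k)
    then obtain y m where y: "y \<in> cantor_set N C" and m: "real N ^ k * x = y + real_of_int m" by blast
    obtain d y' where d: "d \<in> C" and y': "y' \<in> cantor_set N C" and yy: "y = (y' + real d) / real N"
      using props(3)[OF y] by blast
    have "real N ^ Suc k * x = real N * (y + real_of_int m)" using m by simp
    also have "\<dots> = y' + real_of_int (int d + int N * m)" using yy Nr by (simp add: field_simps)
    finally show ?case using y' by blast
  qed
  then obtain y m where y: "y \<in> cantor_set N C" and m: "real N ^ k * x = y + real_of_int m" by blast
  obtain d y' where d: "d \<in> C" and y': "y' \<in> cantor_set N C" and yy: "y = (y' + real d) / real N"
    using props(3)[OF y] by blast
  have y'01: "0 \<le> y'" "y' \<le> 1" using y' props(2) by auto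
  have dN: "d < N" using d C unfolding cantor_data_def by auto
  have dj: "d \<noteq> j0" using d j0 by auto
  define y0 where "y0 = (2 * real j0 + 1) / (2 * real N)"
  define a where "a = 1 / (2 * real N)"
  have a0: "a > 0" "a < 1/2" using Nr by (auto simp: a_def)
  have fr: "frac (real N ^ k * x - y0) = frac (y - y0)"
  proof -
    have eq: "real N ^ k * x - y0 = (y - y0) + real_of_int m" using m by simp
    have "(y - y0) + real_of_int m - frac (y - y0) = real_of_int (\<lfloor>y - y0\<rfloor> + m)"
      by (simp add: frac_def)
    hence "(y - y0) + real_of_int m - frac (y - y0) \<in> \<int>" by (metis Ints_of_int)
    hence "frac ((y - y0) + real_of_int m) = frac (y - y0)"
      unfolding frac_unique_iff by (simp add: frac_lt_1)
    thus ?thesis by (subst eq)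
  qed
  have "frac (y - y0) \<in> {a..1 - a}"
  proof (cases "d < j0")
    case True
    hence "real d + 1 \<le> real j0" by simp
    hence "y \<le> real j0 / real N" using yy y'01 Nr by (simp add: divide_right_mono)
    hence v: "y - y0 \<le> - a" using Nr by (simp add: y0_def a_def field_simps)
    have v2: "y - y0 \<ge> -1 + a"
    proof -
      have y0a: "y0 \<le> 1 - a"
      proof -
        have "real j0 + 1 \<le> real N" using j0 by simp
        hence "2 * real j0 + 1 \<le> 2 * real N - 1" by simp
        hence "(2 * real j0 + 1) / (2 * real N) \<le> (2 * real N - 1) / (2 * real N)"
          using Nr by (intro divide_right_mono) auto
        also have "(2 * real N - 1) / (2 * real N) = 1 - a" using Nr by (simp add: a_def field_simps)
        finally show ?thesis by (simp add: y0_def)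
      qed
      have "y \<ge> 0" using yy y'01 Nr by simp
      with y0a show ?thesis by simp
    qed
    have "frac (y - y0) = y - y0 + 1"
      unfolding frac_unique_iff using v v2 a0 by auto
    then show ?thesis using v v2 by simp
  next
    case False
    hence "real j0 + 1 \<le> real d" using dj by simp
    hence "y \<ge> (real j0 + 1) / real N" using yy y'01 Nr by (simp add: divide_right_mono)
    hence v: "y - y0 \<ge> a" using Nr by (simp add: y0_def a_def field_simps)
    have v2: "y - y0 \<le> 1 - a"
    proof -
      have "y \<le> 1" using y props(2) by auto
      moreover have "a \<le> y0" unfolding a_def y0_def using Nr by (intro divide_right_mono) auto
      ultimately show ?thesis by simp
    qed
    have "frac (y - y0) = y - y0"
      unfolding frac_unique_iff using v v2 a0 by auto
    then show ?thesis using v v2 by simp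
  qed
  then show ?thesis using fr by (simp add: y0_def a_def)
qed

lemma irr_of_indep:
  assumes ind: "mult_independent (int M) (int N)" and M: "M \<ge> 2" and N: "N \<ge> 2"
  shows "ln (real N) / ln (real M) \<notin> \<rat>"
proof
  assume "ln (real N) / ln (real M) \<in> \<rat>"
  then obtain a b :: int where b: "b > 0" and ab: "ln (real N) / ln (real M) = of_int a / of_int b"
    by (rule Rats_cases') blast
  have lnM: "ln (real M) > 0" using M by simp
  have lnN: "ln (real N) > 0" using N by simp
  have "of_int a / of_int b > (0::real)" using ab lnM lnN by (metis divide_pos_pos)
  hence a: "a > 0" using b by (simp add: zero_less_divide_iff)
  have eq: "real_of_int b * ln (real N) = real_of_int a * ln (real M)"
    using ab lnM b by (simp add: field_simps)
  have "ln (real N ^ nat b) = ln (real M ^ nat a)"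
    using eq a b by (simp add: ln_realpow)
  hence pw: "real N ^ nat b = real M ^ nat a"
    using M N by (subst (asm) ln_inj_iff) auto
  have "mult_dependent (int M) (int N)"
  proof -
    have "(of_int (int M) :: real) powi a = real M ^ nat a"
      using a by (metis of_int_of_nat_eq power_int_of_nat int_nat_eq order_less_imp_le nat_0_le)
    moreover have "(of_int (int N) :: real) powi b = real N ^ nat b"
      using b by (metis of_int_of_nat_eq power_int_of_nat int_nat_eq order_less_imp_le nat_0_le)
    ultimately have "(of_int (int M) :: real) powi a = (of_int (int N) :: real) powi b" using pw by simp
    then show ?thesis unfolding mult_dependent_def
      apply (rule_tac exI[where x=a])
      apply (rule_tac exI[where x=b])
      using a by simp
  qed
  with ind show False unfolding mult_independent_def by simp
qed

lemma seq_exists: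
  assumes P: "cm_prop M B \<nu>" and B: "finite B" and M: "M \<ge> 3" and N: "N \<ge> 2"
    and irr: "ln (real N) / ln (real M) \<notin> \<rat>"
    and b: "b0 \<in> B" "b1 \<in> B" "b0 < b1" and H: "finite H" "0 \<notin> H"
  shows "\<exists>\<kappa>::nat\<Rightarrow>nat. \<forall>j<n. \<forall>j'<n. j \<noteq> j' \<longrightarrow> (\<forall>h\<in>H. \<forall>h'\<in>H.
           cmod (char \<nu> (2 * pi * (real_of_int h * real N ^ \<kappa> j - real_of_int h' * real N ^ \<kappa> j'))) \<le> rhoB M B ^ T)"
proof (induction n)
  case 0 then show ?case by simp
next
  case (Suc n)
  then obtain \<kappa> :: "nat \<Rightarrow> nat" where IH: "\<forall>j<n. \<forall>j'<n. j \<noteq> j' \<longrightarrow> (\<forall>h\<in>H. \<forall>h'\<in>H.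
           cmod (char \<nu> (2 * pi * (real_of_int h * real N ^ \<kappa> j - real_of_int h' * real N ^ \<kappa> j'))) \<le> rhoB M B ^ T)"
    by blast
  define \<delta>0 where "\<delta>0 = int (b1 - b0)"
  have \<delta>0: "\<delta>0 > 0" using b by (simp add: \<delta>0_def)
  define G where "G = (\<lambda>h. \<delta>0 * h) ` H"
  have G: "finite G" "0 \<notin> G" using H \<delta>0 by (auto simp: G_def)
  define R where "R = (\<Sum>j<n. \<Sum>h'\<in>H. \<bar>real_of_int (\<delta>0 * h' * int N ^ \<kappa> j)\<bar>)"
  obtain k where k: "\<forall>g\<in>G. \<forall>A::int. \<bar>real_of_int A\<bar> \<le> R \<longrightarrow>
           (\<exists>S. finite S \<and> card S = T \<and>
              (\<forall>i\<in>S. frac (real_of_int (g * int N ^ k - A) / real M ^ Suc i)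
                        \<in> {1 / (4 * real M)..1 - 1 / (4 * real M)}))"
    using many_good[OF M N irr G, of R T] by blast
  have one: "cmod (char \<nu> (2 * pi * (real_of_int h * real N ^ k - real_of_int h' * real N ^ \<kappa> j'))) \<le> rhoB M B ^ T"
    if h: "h \<in> H" "h' \<in> H" and j': "j' < n" for h h' j'
  proof -
    define A where "A = \<delta>0 * h' * int N ^ \<kappa> j'"
    have AR: "\<bar>real_of_int A\<bar> \<le> R"
    proof -
      have "\<bar>real_of_int A\<bar> \<le> (\<Sum>h''\<in>H. \<bar>real_of_int (\<delta>0 * h'' * int N ^ \<kappa> j')\<bar>)"
        unfolding A_def using H h by (intro member_le_sum) auto
      also have "\<dots> \<le> R" unfolding R_def using j'
        by (intro member_le_sum[where f="\<lambda>j. \<Sum>h'\<in>H. \<bar>real_of_int (\<delta>0 * h' * int N ^ \<kappa> j)\<bar>"]) (auto intro: sum_nonneg)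
      finally show ?thesis .
    qed
    have "\<delta>0 * h \<in> G" unfolding G_def using h by blast
    then obtain S where S: "finite S" "card S = T"
      and good: "\<forall>i\<in>S. frac (real_of_int (\<delta>0 * h * int N ^ k - A) / real M ^ Suc i) \<in> {1 / (4 * real M)..1 - 1 / (4 * real M)}"
      using k AR by blast
    have "cmod (char \<nu> (2 * pi * (real_of_int h * real N ^ k - real_of_int h' * real N ^ \<kappa> j'))) \<le> rhoB M B ^ card S"
    proof (rule char_bound[OF P B b M S(1)])
      fix i assume i: "i \<in> S"
      have eqn: "real (b1 - b0) * ((real_of_int h * real N ^ k - real_of_int h' * real N ^ \<kappa> j') / real M ^ Suc i)
          = real_of_int (\<delta>0 * h * int N ^ k - A) / real M ^ Suc i"
      proof -
        have "real (b1 - b0) = real_of_int \<delta>0" by (simp add: \<delta>0_def)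
        moreover have "real_of_int (\<delta>0 * h * int N ^ k - A) = real_of_int \<delta>0 * (real_of_int h * real N ^ k - real_of_int h' * real N ^ \<kappa> j')"
          by (simp add: A_def algebra_simps)
        ultimately show ?thesis by simp
      qed
      show "frac (real (b1 - b0) * ((real_of_int h * real N ^ k - real_of_int h' * real N ^ \<kappa> j') / real M ^ Suc i))
          \<in> {1 / (4 * real M)..1 - 1 / (4 * real M)}" by (subst eqn) (use good i in blast)
    qed
    then show ?thesis using S by simp
  qed
  define \<kappa>' where "\<kappa>' = \<kappa>(n := k)"
  show ?case
  proof (intro exI[of _ \<kappa>'] allI impI ballI)
    fix j j' h h' assume j: "j < Suc n" and j': "j' < Suc n" and jj: "j \<noteq> j'" and h: "h \<in> H" and h': "h' \<in> H"
    show "cmod (char \<nu> (2 * pi * (real_of_int h * real N ^ \<kappa>' j - real_of_int h' * real N ^ \<kappa>' j'))) \<le> rhoB M B ^ T"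
    proof (cases "j = n")
      case True
      then have "j' < n" using j' jj by simp
      have kk: "\<kappa>' j = k" "\<kappa>' j' = \<kappa> j'" using True \<open>j' < n\<close> by (auto simp: \<kappa>'_def)
      show ?thesis unfolding kk using one[OF h h' \<open>j' < n\<close>] .
    next
      case False
      hence jn: "j < n" using j by simp
      show ?thesis
      proof (cases "j' = n")
        case True
        have "char \<nu> (2 * pi * (real_of_int h * real N ^ \<kappa>' j - real_of_int h' * real N ^ \<kappa>' j'))
            = char \<nu> (- (2 * pi * (real_of_int h' * real N ^ k - real_of_int h * real N ^ \<kappa> j)))"
          using True jn by (simp add: \<kappa>'_def algebra_simps)
        also have "\<dots> = cnj (char \<nu> (2 * pi * (real_of_int h' * real N ^ k - real_of_int h * real N ^ \<kappa> j)))"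
          by (rule char_neg)
        finally show ?thesis using one[OF h' h jn] by simp
      next
        case False
        hence "j' < n" using j' by simp
        have kk: "\<kappa>' j = \<kappa> j" "\<kappa>' j' = \<kappa> j'" using jn \<open>j' < n\<close> by (auto simp: \<kappa>'_def)
        show ?thesis unfolding kk using IH[rule_format, OF jn \<open>j' < n\<close> jj h h'] .
      qed
    qed
  qed
qed

lemma measure_zero:
  assumes B: "cantor_data M B" and C: "cantor_data N C" and ind: "mult_independent (int M) (int N)"
  shows "measure (cantor_measure M B) (cantor_set N C) = 0"
proof (rule ccontr)
  define \<nu> where "\<nu> = cantor_measure M B"
  assume ne: "measure (cantor_measure M B) (cantor_set N C) \<noteq> 0"
  have P: "cm_prop M B \<nu>" using cantor_measure_prop[OF B] by (simp add: \<nu>_def)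
  interpret real_distribution \<nu> using P by (rule cm_prop_real_distribution)
  have ps: "prob_space \<nu>" by unfold_locales
  have sets: "sets \<nu> = sets borel" by simp
  have M: "M \<ge> 3" and Bsub: "B \<subseteq> {0..<M}" and cB: "card B \<ge> 2" using B unfolding cantor_data_def by auto
  have finB: "finite B" using Bsub finite_subset by blast
  have N: "N \<ge> 3" and Csub: "C \<subseteq> {0..<N}" and cC: "card C \<le> N - 1" using C unfolding cantor_data_def by auto
  have irr: "ln (real N) / ln (real M) \<notin> \<rat>" by (rule irr_of_indep[OF ind]) (use M N in auto)
  define Z where "Z = cantor_set N C"
  have Zb: "Z \<in> sets borel"
    unfolding Z_def by (intro borel_closed compact_imp_closed cantor_set_props(1)[OF C])
  define \<mu>Z where "\<mu>Z = measure \<nu> Z"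
  have \<mu>Z: "\<mu>Z > 0"
    using ne measure_nonneg[of "cantor_measure M B" "cantor_set N C"] unfolding \<mu>Z_def \<nu>_def Z_def by linarith
  obtain b0 b1 where b: "b0 \<in> B" "b1 \<in> B" "b0 < b1"
  proof -
    obtain x where x: "x \<in> B" using cB by fastforce
    have "card (B - {x}) \<ge> 1" using cB x finB by simp
    then obtain y where y: "y \<in> B" "y \<noteq> x" by (metis DiffE card_eq_0_iff empty_iff insertI1 not_one_le_zero subsetI subset_antisym)
    show ?thesis
    proof (cases "x < y")
      case True then show ?thesis using that x y by blast
    next
      case False then have "y < x" using y by simp
      then show ?thesis using that x y by blast
    qed
  qed
  obtain j0 where j0: "j0 < N" "j0 \<notin> C"
  proof -
    have "\<not> {0..<N} \<subseteq> C"
    proof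
      assume "{0..<N} \<subseteq> C"
      hence "card {0..<N} \<le> card C" using Csub finite_subset by (intro card_mono) auto
      thus False using cC N by simp
    qed
    then obtain j where "j \<in> {0..<N}" "j \<notin> C" by blast
    then show ?thesis using that by simp
  qed
  define a where "a = 1 / (2 * real N)"
  have a: "0 < a" "a \<le> 1/2" using N by (auto simp: a_def)
  define \<beta> where "\<beta> = 2 + 2 * cos (2 * pi * a)"
  have \<beta>0: "0 \<le> \<beta>" using cos_ge_minus_one[of "2 * pi * a"] unfolding \<beta>_def by linarith
  have \<beta>4: "\<beta> < 4"
  proof -
    have "cos (2 * pi * a) < cos 0" by (rule cos_monotone_0_pi) (use a in auto)
    thus ?thesis by (simp add: \<beta>_def)
  qed
  obtain L where L: "\<beta> ^ L < real ((2 * L) choose L)" using choose_L[OF \<beta>0 \<beta>4] by blast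
  define \<eta> where "\<eta> = real ((2 * L) choose L) - \<beta> ^ L"
  have \<eta>: "\<eta> > 0" using L by (simp add: \<eta>_def)
  define W where "W = (\<Sum>p\<in>Poff L. cL L p)"
  have cL0: "cL L p \<ge> 0" for p by (simp add: cL_def)
  have W0: "W \<ge> 0" unfolding W_def by (intro sum_nonneg cL0)
  define K where "K = W\<^sup>2 + 1"
  have K: "K > 0" "W\<^sup>2 \<le> K" unfolding K_def using zero_le_power2[of W] by linarith+
  define \<epsilon> where "\<epsilon> = \<eta>\<^sup>2 * \<mu>Z"
  have \<epsilon>: "\<epsilon> > 0" using \<eta> \<mu>Z by (simp add: \<epsilon>_def)
  define \<delta> where "\<delta> = \<epsilon> / (4 * K)"
  have \<delta>: "\<delta> > 0" using \<epsilon> K by (simp add: \<delta>_def)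
  define \<rho> where "\<rho> = rhoB M B"
  have \<rho>: "0 \<le> \<rho>" "\<rho> < 1" using rhoB_lt1[OF M cB] by (auto simp: \<rho>_def)
  obtain T where T: "\<rho> ^ T < \<delta>" using real_arch_pow_inv[OF \<delta> \<rho>(2)] by blast
  obtain n :: nat where n: "4 * K / \<epsilon> < real n" using reals_Archimedean2 by blast
  have npos: "n > 0" using n K \<epsilon> by (metis divide_pos_pos mult_pos_pos of_nat_0 gr0I order.asym zero_less_numeral)
  have Kn: "K / real n < \<epsilon> / 4" using n K \<epsilon> npos by (simp add: divide_less_eq field_simps)
  define H where "H = {h::int. h \<noteq> 0 \<and> \<bar>h\<bar> \<le> int L}"
  have Hfin: "finite H" unfolding H_def by (rule finite_subset[of _ "{- int L..int L}"]) auto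
  have H0: "0 \<notin> H" by (simp add: H_def)
  have hLH: "hL p \<in> H" if "p \<in> Poff L" for p
    using that by (auto simp: H_def hL_def Poff_def)
  obtain \<kappa> :: "nat \<Rightarrow> nat" where \<kappa>: "\<forall>j<n. \<forall>j'<n. j \<noteq> j' \<longrightarrow> (\<forall>h\<in>H. \<forall>h'\<in>H.
           cmod (char \<nu> (2 * pi * (real_of_int h * real N ^ \<kappa> j - real_of_int h' * real N ^ \<kappa> j'))) \<le> rhoB M B ^ T)"
    using seq_exists[OF P finB M _ irr b Hfin H0, of n T] N by auto
  define y0 where "y0 = (2 * real j0 + 1) / (2 * real N)"
  define Q where "Q = {..<n} \<times> Poff L"
  have Qfin: "finite Q" by (simp add: Q_def finite_Poff)
  define w where "w u = complex_of_real (cL L (snd u) / real n) * iexp (2 * pi * (- real_of_int (hL (snd u)) * y0))" for u :: "nat \<times> nat \<times> nat"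
  define fr where "fr u = real_of_int (hL (snd u)) * real N ^ \<kappa> (fst u)" for u :: "nat \<times> nat \<times> nat"
  define A where "A x = (\<Sum>u\<in>Q. w u * iexp (2 * pi * fr u * x))" for x
  have lowZ: "\<eta> \<le> cmod (A x)" if x: "x \<in> Z" for x
  proof -
    define \<psi> where "\<psi> j = (2 + 2 * cos (2 * pi * (real N ^ \<kappa> j * x - y0))) ^ L" for j
    have inner: "(\<Sum>p\<in>Poff L. w (j, p) * iexp (2 * pi * fr (j, p) * x))
        = complex_of_real ((\<psi> j - real ((2 * L) choose L)) / real n)" for j
    proof -
      have "(\<Sum>p\<in>Poff L. w (j, p) * iexp (2 * pi * fr (j, p) * x))
          = (\<Sum>p\<in>Poff L. complex_of_real (cL L p) * iexp (2 * pi * real_of_int (hL p) * (real N ^ \<kappa> j * x - y0))) / complex_of_real (real n)"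
        unfolding sum_divide_distrib
      proof (intro sum.cong refl)
        fix p
        have "iexp (2 * pi * (- real_of_int (hL p) * y0)) * iexp (2 * pi * fr (j, p) * x)
            = iexp (2 * pi * real_of_int (hL p) * (real N ^ \<kappa> j * x - y0))"
          by (simp add: fr_def algebra_simps flip: exp_add)
        then show "w (j, p) * iexp (2 * pi * fr (j, p) * x)
            = complex_of_real (cL L p) * iexp (2 * pi * real_of_int (hL p) * (real N ^ \<kappa> j * x - y0)) / complex_of_real (real n)"
          unfolding w_def by (simp add: field_simps)
      qed
      also have "\<dots> = complex_of_real ((\<psi> j - real ((2 * L) choose L)) / real n)"
        by (simp only: kernel_off \<psi>_def of_real_divide)
      finally show ?thesis .
    qed
    have Ax: "A x = complex_of_real ((\<Sum>j<n. \<psi> j - real ((2 * L) choose L)) / real n)"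
    proof -
      have "A x = (\<Sum>j<n. \<Sum>p\<in>Poff L. w (j, p) * iexp (2 * pi * fr (j, p) * x))"
        unfolding A_def Q_def sum.cartesian_product' ..
      also have "\<dots> = (\<Sum>j<n. complex_of_real ((\<psi> j - real ((2 * L) choose L)) / real n))"
        by (simp only: inner)
      also have "\<dots> = complex_of_real ((\<Sum>j<n. \<psi> j - real ((2 * L) choose L)) / real n)"
        by (simp add: sum_divide_distrib)
      finally show ?thesis .
    qed
    have \<psi>le: "\<psi> j \<le> \<beta> ^ L" for j
    proof -
      have fw: "frac (real N ^ \<kappa> j * x - y0) \<in> {a..1 - a}"
        using Z_window[OF C j0, of x "\<kappa> j"] x by (simp add: Z_def y0_def a_def)
      have "cos (2 * pi * (real N ^ \<kappa> j * x - y0)) \<le> cos (2 * pi * a)"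
        by (rule cos_frac_bound[OF _ a(2) fw]) (use a in simp)
      moreover have "0 \<le> 2 + 2 * cos (2 * pi * (real N ^ \<kappa> j * x - y0))"
        using cos_ge_minus_one[of "2 * pi * (real N ^ \<kappa> j * x - y0)"] by linarith
      ultimately show ?thesis unfolding \<psi>_def \<beta>_def by (intro power_mono) auto
    qed
    have "(\<Sum>j<n. \<psi> j - real ((2 * L) choose L)) \<le> (\<Sum>j<n. - \<eta>)"
      using \<psi>le by (intro sum_mono) (simp add: \<eta>_def)
    also have "\<dots> = - \<eta> * real n" by simp
    finally have "(\<Sum>j<n. \<psi> j - real ((2 * L) choose L)) / real n \<le> - \<eta>"
      using npos by (simp add: divide_le_eq)
    hence "\<eta> \<le> \<bar>(\<Sum>j<n. \<psi> j - real ((2 * L) choose L)) / real n\<bar>" using \<eta> by linarith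
    then show ?thesis unfolding Ax norm_of_real .
  qed
  have lower: "\<eta>\<^sup>2 * measure \<nu> Z \<le> (\<integral>x. (cmod (A x))\<^sup>2 \<partial>\<nu>)"
    unfolding A_def by (rule L2_lower[OF ps sets Qfin Zb]) (use lowZ \<eta> in \<open>auto simp: A_def\<close>)
  have upper: "(\<integral>x. (cmod (A x))\<^sup>2 \<partial>\<nu>)
      \<le> (\<Sum>pp\<in>Q \<times> Q. cmod (w (fst pp)) * cmod (w (snd pp)) * cmod (char \<nu> (2 * pi * (fr (fst pp) - fr (snd pp)))))"
    unfolding A_def by (rule L2_upper[OF ps sets Qfin])
  define c where "c u = cL L (snd u) / real n" for u :: "nat \<times> nat \<times> nat"
  have c0: "c u \<ge> 0" for u using cL0 by (simp add: c_def)
  have wc: "cmod (w u) = c u" for u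
  proof -
    have "cmod (w u) = \<bar>cL L (snd u) / real n\<bar> * cmod (iexp (2 * pi * (- real_of_int (hL (snd u)) * y0)))"
      unfolding w_def norm_mult norm_of_real ..
    also have "\<dots> = c u" using cL0[of "snd u"] unfolding c_def by simp
    finally show ?thesis .
  qed
  have termb: "cmod (w (fst pp)) * cmod (w (snd pp)) * cmod (char \<nu> (2 * pi * (fr (fst pp) - fr (snd pp))))
      \<le> c (fst pp) * c (snd pp) * ((if fst (fst pp) = fst (snd pp) then 1 else 0) + \<delta>)"
    if pp: "pp \<in> Q \<times> Q" for pp
  proof -
    obtain u v where uv: "pp = (u, v)" by (cases pp) blast
    have u: "fst u < n" "snd u \<in> Poff L" and v: "fst v < n" "snd v \<in> Poff L"
      using pp uv by (auto simp: Q_def)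
    have "cmod (char \<nu> (2 * pi * (fr u - fr v))) \<le> (if fst u = fst v then 1 else 0) + \<delta>"
    proof (cases "fst u = fst v")
      case True then show ?thesis using cmod_char_le_1[of "2 * pi * (fr u - fr v)"] \<delta> by simp
    next
      case False
      have "cmod (char \<nu> (2 * pi * (fr u - fr v))) \<le> rhoB M B ^ T"
        using \<kappa> u v False hLH by (simp add: fr_def)
      also have "\<dots> \<le> \<delta>" using T by (simp add: \<rho>_def)
      finally show ?thesis using False by simp
    qed
    then show ?thesis unfolding uv wc using c0[of u] c0[of v] by (simp add: mult_left_mono)
  qed
  have sumc: "(\<Sum>u\<in>Q. c u) = W"
  proof -
    have "(\<Sum>u\<in>Q. c u) = (\<Sum>j<n. \<Sum>p\<in>Poff L. cL L p / real n)"
      unfolding Q_def c_def sum.cartesian_product' by simp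
    also have "\<dots> = W" using npos by (simp add: W_def sum_divide_distrib[symmetric])
    finally show ?thesis .
  qed
  have sumI: "(\<Sum>v\<in>Q. c v * (if fst u = fst v then 1 else 0)) = W / real n" if u: "fst u < n" for u
  proof -
    have "(\<Sum>v\<in>Q. c v * (if fst u = fst v then 1 else 0)) = (\<Sum>j<n. \<Sum>p\<in>Poff L. (if fst u = j then cL L p / real n else 0))"
      unfolding Q_def c_def sum.cartesian_product' by (intro sum.cong refl) auto
    also have "\<dots> = (\<Sum>j<n. (if fst u = j then W / real n else 0))"
      by (intro sum.cong refl) (simp add: W_def sum_divide_distrib)
    also have "\<dots> = W / real n" using u by (simp add: sum.delta)
    finally show ?thesis .
  qed
  have "(\<Sum>pp\<in>Q \<times> Q. cmod (w (fst pp)) * cmod (w (snd pp)) * cmod (char \<nu> (2 * pi * (fr (fst pp) - fr (snd pp)))))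
      \<le> (\<Sum>pp\<in>Q \<times> Q. c (fst pp) * c (snd pp) * ((if fst (fst pp) = fst (snd pp) then 1 else 0) + \<delta>))"
    by (intro sum_mono termb)
  also have "\<dots> = (\<Sum>u\<in>Q. \<Sum>v\<in>Q. c u * c v * ((if fst u = fst v then 1 else 0) + \<delta>))"
    by (simp only: sum.cartesian_product' fst_conv snd_conv)
  also have "\<dots> = (\<Sum>u\<in>Q. c u * (\<Sum>v\<in>Q. c v * (if fst u = fst v then 1 else 0))) + \<delta> * (\<Sum>u\<in>Q. c u) * (\<Sum>v\<in>Q. c v)"
    by (simp add: algebra_simps sum.distrib sum_distrib_left sum_distrib_right)
  also have "(\<Sum>u\<in>Q. c u * (\<Sum>v\<in>Q. c v * (if fst u = fst v then 1 else 0))) = (\<Sum>u\<in>Q. c u * (W / real n))"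
  proof (intro sum.cong refl)
    fix u assume "u \<in> Q"
    hence "fst u < n" by (auto simp: Q_def)
    then show "c u * (\<Sum>v\<in>Q. c v * (if fst u = fst v then 1 else 0)) = c u * (W / real n)" by (simp only: sumI)
  qed
  also have "\<dots> = (\<Sum>u\<in>Q. c u) * (W / real n)" by (rule sum_distrib_right[symmetric])
  also have "\<dots> = W\<^sup>2 / real n" by (simp add: sumc power2_eq_square)
  finally have "(\<integral>x. (cmod (A x))\<^sup>2 \<partial>\<nu>) \<le> W\<^sup>2 / real n + \<delta> * W\<^sup>2"
    using upper by (simp add: sumc power2_eq_square)
  also have "\<dots> \<le> K / real n + \<delta> * K"
    using K \<delta> npos by (intro add_mono divide_right_mono mult_left_mono) auto
  also have "\<delta> * K = \<epsilon> / 4" using K by (simp add: \<delta>_def)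
  finally have "\<epsilon> \<le> K / real n + \<epsilon> / 4" using lower by (simp add: \<epsilon>_def \<mu>Z_def)
  with Kn \<epsilon> show False by linarith
qed

lemma indep_sym: "mult_independent r s \<Longrightarrow> mult_independent s r"
  unfolding mult_independent_def mult_dependent_def by metis

theorem theorem2p4:
  fixes M N :: nat and B C :: "nat set"
  assumes "cantor_data M B" and "cantor_data N C"
    and "mult_independent (int M) (int N)"
  shows "measure (cantor_measure M B) (cantor_set M B \<inter> cantor_set N C) = 0 \<and>
         measure (cantor_measure N C) (cantor_set M B \<inter> cantor_set N C) = 0"
proof -
  have Z1: "measure (cantor_measure M B) (cantor_set N C) = 0"
    by (rule measure_zero[OF assms])
  have Z2: "measure (cantor_measure N C) (cantor_set M B) = 0"
    by (rule measure_zero[OF assms(2,1) indep_sym[OF assms(3)]])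
  have P1: "cm_prop M B (cantor_measure M B)" by (rule cantor_measure_prop[OF assms(1)])
  have P2: "cm_prop N C (cantor_measure N C)" by (rule cantor_measure_prop[OF assms(2)])
  interpret m1: prob_space "cantor_measure M B" using P1 unfolding cm_prop_def by auto
  interpret m2: prob_space "cantor_measure N C" using P2 unfolding cm_prop_def by auto
  have s1: "sets (cantor_measure M B) = sets borel" using P1 unfolding cm_prop_def by auto
  have s2: "sets (cantor_measure N C) = sets borel" using P2 unfolding cm_prop_def by auto
  have b1: "cantor_set N C \<in> sets (cantor_measure M B)"
    unfolding s1 by (intro borel_closed compact_imp_closed cantor_set_props(1)[OF assms(2)])
  have b2: "cantor_set M B \<in> sets (cantor_measure N C)"
    unfolding s2 by (intro borel_closed compact_imp_closed cantor_set_props(1)[OF assms(1)])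
  have "measure (cantor_measure M B) (cantor_set M B \<inter> cantor_set N C) \<le> measure (cantor_measure M B) (cantor_set N C)"
    by (rule m1.finite_measure_mono[OF _ b1]) auto
  moreover have "measure (cantor_measure N C) (cantor_set M B \<inter> cantor_set N C) \<le> measure (cantor_measure N C) (cantor_set M B)"
    by (rule m2.finite_measure_mono[OF _ b2]) auto
  moreover have "0 \<le> measure (cantor_measure M B) (cantor_set M B \<inter> cantor_set N C)" by (rule measure_nonneg)
  moreover have "0 \<le> measure (cantor_measure N C) (cantor_set M B \<inter> cantor_set N C)" by (rule measure_nonneg)
  ultimately show ?thesis using Z1 Z2 by linarith
qed

end
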